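(* Let $q,a,b\in\mathbb{C}\setminus\{0\}$. For a path of decorated ideal triangulations $\tau=\tau_{(0)},\tau_{(1)},\dots,\tau_{(n)}$ in which each $\tau_{(k)}$ is obtained from $\tau_{(k-1)}$ by a single move $\pi_k$ (a reindexing, a mark rotation or a diagonal exchange), let its composite be $\widehat\pi_1\circ\widehat\pi_2\circ\cdots\circ\widehat\pi_n:\widehat{\mathcal K}^q_{\tau_{(n)}}\to\widehat{\mathcal K}^q_{\tau_{(0)}}$, where $\widehat\pi_k:\widehat{\mathcal K}^q_{\tau_{(k)}}\to\widehat{\mathcal K}^q_{\tau_{(k-1)}}$ is the move map (depending on $a,b$) described in the context; for the empty path the composite is the identity. Then, in each of the following eight situations, the two listed paths start at the same decorated ideal triangulation $\tau$ and end at the same decorated ideal triangulation, and their composites are equal: (1) two successive reindexings $\tau\to\tau'\to\tau''$, versus the single reindexing $\tau\to\tau''$; (2) if $\varphi_{ij}$ is applicable to $\tau$: the path $\tau\to\varphi_{ij}(\tau)\to\varphi_{ij}(\varphi_{ij}(\tau))$, versus the path $\tau\to\alpha_{i\leftrightarrow j}(\tau)$, where $\alpha_{i\leftrightarrow j}$ is the transposition of $i$ and $j$; (3) if $\varphi_{ij}$ is applicable to $\tau$, $\alpha\in\mathfrak S_{2m}$, $i'=\alpha^{-1}(i)$, $j'=\alpha^{-1}(j)$: the path $\tau\to\varphi_{ij}(\tau)\to\alpha(\varphi_{ij}(\tau))$, versus the path $\tau\to\alpha(\tau)\to\varphi_{i'j'}(\alpha(\tau))$; (4) if $\{i,j\}\neq\{k,l\}$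 and both $\varphi_{ij}$ and $\varphi_{kl}$ are applicable to $\tau$: the path $\tau\to\varphi_{kl}(\tau)\to\varphi_{ij}(\varphi_{kl}(\tau))$, versus $\tau\to\varphi_{ij}(\tau)\to\varphi_{kl}(\varphi_{ij}(\tau))$; (5) (pentagon relation) if three distinct triangles $\tau_i,\tau_j,\tau_k$ of $\tau$ form a pentagon with vertices $P_1,\dots,P_5$ in counterclockwise order, with $\tau_i=P_1P_2P_3$ marked at $P_2$, $\tau_j=P_1P_3P_4$ marked at $P_3$, $\tau_k=P_1P_4P_5$ marked at $P_4$: writing $\omega_{\mu\nu}$ for the three-step path "apply $\rho_\nu$, then $\varphi_{\mu\nu}$, then $\rho_\mu$", the path obtained by performing $\omega_{ij}$, then $\omega_{ik}$, then $\omega_{jk}$, versus the path obtained by performing $\omega_{jk}$, then $\omega_{ij}$; (6) the path $\tau\to\rho_i(\tau)\to\rho_i(\rho_i(\tau))\to\rho_i(\rho_i(\rho_i(\tau)))=\tau$, versus the empty path at $\tau$ (i.e. this composite is the identity of $\widehat{\mathcal K}^q_\tau$); (7) the path $\tau\to\rho_i(\tau)\to\rho_j(\rho_i(\tau))$, versus $\tau\to\rho_j(\tau)\to\rho_i(\rho_j(\tau))$; (8) for $\alpha\in\mathfrak S_{2m}$ and $i'=\alpha^{-1}(i)$: the path $\tau\to\rho_i(\tau)\to\alpha(\rho_i(\tau))$, versus the path $\tau\to\alpha(\tau)\to\rho_{i'}(\alpha(\tau))$.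
   Context: Let $\bar S$ be a closed oriented surface of genus $g$ and $S=\bar S\setminus\{v_1,\dots,v_p\}$ with $p\ge 1$ and $m:=2g-2+p>0$. An ideal triangulation of $S$ is (the isotopy class of) a triangulation of $\bar S$ whose vertex set is exactly $\{v_1,\dots,v_p\}$ (two sides of a triangle may be glued to the same edge); it has $3m$ edges and $2m$ triangles. A decorated ideal triangulation $\tau$ is an ideal triangulation whose triangles are numbered $\tau_1,\dots,\tau_{2m}$ and in each triangle of which one corner is marked. Moves: (reindexing) for $\alpha\in\mathfrak S_{2m}$, $\alpha(\tau)$ has $k$-th triangle $\tau_{\alpha(k)}$ with the same marks; (mark rotation) $\rho_i(\tau)$ is obtained by moving the mark of $\tau_i$ to the next corner of $\tau_i$ in counterclockwise order; (diagonal exchange) $\varphi_{ij}$ is applicable to $\tau$ when distinct triangles $\tau_i,\tau_j$ share an edge $e$ and both marked corners are opposite to $e$: write the quadrilateral $\tau_i\cup\tau_j$ with corners $A,B,C,D$ in counterclockwise order, $\tau_i=DAB$ marked at $A$, $\tau_j=BCD$ marked at $C$, $e=BD$; then $\varphi_{ij}(\tau)$ replaces $e$ by the diagonal $AC$, its $i$-th triangle is $CDA$ marked at $D$, its $j$-th triangle is $ABC$ marked at $B$, and all other triangles, numbers and marks are unchanged. For $q\in\mathbb C\setminus\{0\}$, the Kashaev algebra $\mathcal K^q_\tau$ is the $\mathbb C$-algebra generated by $Y_\mu^{\pm1},Z_\mu^{\pm1}$ ($\mu=1,\dots,2m$, attached to $\tau_\mu$) with relations $Y_\mu Y_\nu=Y_\nu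 Y_\mu$, $Z_\mu Z_\nu=Z_\nu Z_\mu$, $Y_\mu Z_\nu=Z_\nu Y_\mu$ for $\mu\ne\nu$, and $Z_\mu Y_\mu=q^2Y_\mu Z_\mu$; $\widehat{\mathcal K}^q_\tau$ is its division algebra of fractions. Generators of $\widehat{\mathcal K}^q_{\tau'}$ are written $Y'_\mu,Z'_\mu$. Move maps $\widehat{\mathcal K}^q_{\tau'}\to\widehat{\mathcal K}^q_\tau$ (algebra homomorphisms determined by the images of generators): if $\tau'=\alpha(\tau)$, $\widehat\alpha(Y'_k)=Y_{\alpha(k)}$, $\widehat\alpha(Z'_k)=Z_{\alpha(k)}$; if $\tau'=\rho_i(\tau)$, $\widehat\rho_i$ fixes $Y'_j\mapsto Y_j$, $Z'_j\mapsto Z_j$ for $j\neq i$ and $\widehat\rho_i(Y'_i)=aY_i^{-1}Z_i$, $\widehat\rho_i(Z'_i)=Y_i^{-1}$; if $\tau'=\varphi_{ij}(\tau)$, $\widehat\varphi_{ij}$ sends $Y'_k\mapsto Y_k$, $Z'_k\mapsto Z_k$ for $k\notin\{i,j\}$ and $\widehat\varphi_{ij}(Y'_i)=(bY_iY_j+Z_iZ_j)^{-1}Z_j$, $\widehat\varphi_{ij}(Z'_i)=b(bY_iY_j+Z_iZ_j)^{-1}Y_i$, $\widehat\varphi_{ij}(Y'_j)=(bY_iY_j+Z_iZ_j)^{-1}Z_i$, $\widehat\varphi_{ij}(Z'_j)=b(bY_iY_j+Z_iZ_j)^{-1}Y_j$. *)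

theory Defs
  imports Complex_Main "HOL-Combinatorics.Permutations" "HOL-Combinatorics.Transposition"
begin

text \<open>Triangles are numbered 0,...,2m-1 (the paper uses 1,...,2m). In triangle mu the
corners are labelled 0,1,2 in counterclockwise order, corner 0 being the marked corner.
The side (mu,c) (c<3) is the side of triangle mu going from corner c to corner c+1 mod 3
(counterclockwise). A decorated ideal triangulation is encoded by its gluing: the
fixed-point-free involution T on the set of sides pairing the two sides glued to the same
edge (the gluing is orientation reversing, so side (mu,c) glued to (nu,d) identifies corner
c of mu with corner d+1 of nu and corner c+1 of mu with corner d of nu). Off the set of
sides T is the identity (canonical representative).\<close>

type_synonym dtri = "nat \<times> nat \<Rightarrow> nat \<times> nat"

definition sides :: "nat \<Rightarrow> (nat \<times> nat) set" where
  "sides m = {..<2*m} \<times> {..<3}"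

definition adjacent_tri :: "dtri \<Rightarrow> (nat \<times> nat) set" where
  "adjacent_tri T = {(mu, nu). \<exists>c d. T (mu, c) = (nu, d)}"

definition valid_dtri :: "nat \<Rightarrow> dtri \<Rightarrow> bool" where
  "valid_dtri m T \<longleftrightarrow>
     (\<forall>s. s \<notin> sides m \<longrightarrow> T s = s) \<and>
     (\<forall>s\<in>sides m. T s \<in> sides m \<and> T s \<noteq> s \<and> T (T s) = s) \<and>
     (\<forall>mu<2*m. \<forall>nu<2*m. (mu, nu) \<in> (adjacent_tri T)\<^sup>*)"

datatype move = Reindex "nat \<Rightarrow> nat" | Rot nat | Flip nat nat

definition rot_new_old :: "nat \<Rightarrow> nat \<times> nat \<Rightarrow> nat \<times> nat" where
  "rot_new_old i s = (if fst s = i \<and> snd s < 3 then (i, (snd s + 1) mod 3) else s)"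

definition rot_old_new :: "nat \<Rightarrow> nat \<times> nat \<Rightarrow> nat \<times> nat" where
  "rot_old_new i s = (if fst s = i \<and> snd s < 3 then (i, (snd s + 2) mod 3) else s)"

text \<open>Diagonal exchange: tau_i = DAB marked at A (corners A,B,D = 0,1,2),
tau_j = BCD marked at C (corners C,D,B = 0,1,2), e = BD = side (i,1) = side (j,1).
New tau_i = CDA marked at D (corners D,A,C), new tau_j = ABC marked at B (corners B,C,A).
New side (i,0)=DA is old (i,2); new (i,2)=CD is old (j,0); new (j,0)=BC is old (j,2);
new (j,2)=AB is old (i,0); new (i,1),(j,1) are the new diagonal AC.\<close>

definition flip_new_old :: "nat \<Rightarrow> nat \<Rightarrow> nat \<times> nat \<Rightarrow> nat \<times> nat" where
  "flip_new_old i j s =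
     (if s = (i,0) then (i,2) else if s = (i,2) then (j,0)
      else if s = (j,0) then (j,2) else if s = (j,2) then (i,0) else s)"

definition flip_old_new :: "nat \<Rightarrow> nat \<Rightarrow> nat \<times> nat \<Rightarrow> nat \<times> nat" where
  "flip_old_new i j s =
     (if s = (i,2) then (i,0) else if s = (j,0) then (i,2)
      else if s = (j,2) then (j,0) else if s = (i,0) then (j,2) else s)"

fun move_tri :: "move \<Rightarrow> dtri \<Rightarrow> dtri" where
  "move_tri (Reindex \<alpha>) T =
     (\<lambda>(k, c). (case T (\<alpha> k, c) of (nu, d) \<Rightarrow> (inv \<alpha> nu, d)))"
| "move_tri (Rot i) T = rot_old_new i \<circ> T \<circ> rot_new_old i"
| "move_tri (Flip i j) T = flip_old_new i j \<circ> T \<circ> flip_new_old i j"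

text \<open>Applicability of a move: alpha in S_2m; rho_i for a triangle i;
phi_ij when tau_i, tau_j are distinct and share an edge opposite to both marks.\<close>

fun applicable :: "nat \<Rightarrow> move \<Rightarrow> dtri \<Rightarrow> bool" where
  "applicable m (Reindex \<alpha>) T \<longleftrightarrow> \<alpha> permutes {..<2*m}"
| "applicable m (Rot i) T \<longleftrightarrow> i < 2*m"
| "applicable m (Flip i j) T \<longleftrightarrow> i < 2*m \<and> j < 2*m \<and> i \<noteq> j \<and> T (i,1) = (j,1)"

fun is_path :: "nat \<Rightarrow> dtri \<Rightarrow> move list \<Rightarrow> bool" where
  "is_path m T [] = True"
| "is_path m T (p # ps) \<longleftrightarrow> applicable m p T \<and> is_path m (move_tri p T) ps"

fun path_end :: "dtri \<Rightarrow> move list \<Rightarrow> dtri" where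
  "path_end T [] = T"
| "path_end T (p # ps) = path_end (move_tri p T) ps"

text \<open>The division algebra of fractions of the Kashaev algebra is represented through a
faithful embedding: D is a division ring (type 'a) that is a C-algebra via the central ring
homomorphism iota, and g mu = (Y_mu, Z_mu) are elements of D satisfying the Kashaev relations
such that the monomials (a C-basis of the Kashaev algebra) are C-linearly independent, i.e.
the induced map from the Kashaev algebra to D is injective. By the universal property of the
Ore localisation it then extends to an embedding of the division algebra of fractions into D,
so equalities in that division algebra are equalities in D.\<close>

type_synonym 'a gens = "nat \<Rightarrow> 'a \<times> 'a"

definition central_C_algebra :: "(complex \<Rightarrow> 'a::division_ring) \<Rightarrow> bool" where
  "central_C_algebra \<iota> \<longleftrightarrow> \<iota> 1 = 1 \<and> (\<forall>x y. \<iota> (x + y) = \<iota> x + \<iota> y) \<and>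
      (\<forall>x y. \<iota> (x * y) = \<iota> x * \<iota> y) \<and> (\<forall>c x. \<iota> c * x = x * \<iota> c)"

definition kmonomial :: "nat \<Rightarrow> 'a::division_ring gens \<Rightarrow> (nat \<Rightarrow> int) \<Rightarrow> (nat \<Rightarrow> int) \<Rightarrow> 'a" where
  "kmonomial m g e f =
     prod_list (map (\<lambda>mu. fst (g mu) powi e mu) [0..<2*m]) *
     prod_list (map (\<lambda>mu. snd (g mu) powi f mu) [0..<2*m])"

definition kashaev_generic :: "nat \<Rightarrow> complex \<Rightarrow> (complex \<Rightarrow> 'a::division_ring) \<Rightarrow> 'a gens \<Rightarrow> bool" where
  "kashaev_generic m q \<iota> g \<longleftrightarrow>
     (\<forall>mu<2*m. fst (g mu) \<noteq> 0 \<and> snd (g mu) \<noteq> 0) \<and>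
     (\<forall>mu<2*m. \<forall>nu<2*m. mu \<noteq> nu \<longrightarrow>
         fst (g mu) * fst (g nu) = fst (g nu) * fst (g mu) \<and>
         snd (g mu) * snd (g nu) = snd (g nu) * snd (g mu) \<and>
         fst (g mu) * snd (g nu) = snd (g nu) * fst (g mu)) \<and>
     (\<forall>mu<2*m. snd (g mu) * fst (g mu) = \<iota> (q\<^sup>2) * fst (g mu) * snd (g mu)) \<and>
     (\<forall>M c. finite M \<longrightarrow> (\<forall>(e, f)\<in>M. \<forall>mu\<ge>2*m. e mu = 0 \<and> f mu = 0) \<longrightarrow>
         (\<Sum>(e, f)\<in>M. \<iota> (c (e, f)) * kmonomial m g e f) = 0 \<longrightarrow> (\<forall>x\<in>M. c x = 0))"

text \<open>Move maps, seen through the embedding: if G gives the images of the generators of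
the algebra of the old triangulation, move_alg gives the images of the generators of the
algebra of the new triangulation under (embedding) o (move map).\<close>

fun move_alg :: "complex \<Rightarrow> complex \<Rightarrow> (complex \<Rightarrow> 'a::division_ring) \<Rightarrow> move \<Rightarrow> 'a gens \<Rightarrow> 'a gens" where
  "move_alg a b \<iota> (Reindex \<alpha>) G = (\<lambda>k. G (\<alpha> k))"
| "move_alg a b \<iota> (Rot i) G =
     G(i := (\<iota> a * inverse (fst (G i)) * snd (G i), inverse (fst (G i))))"
| "move_alg a b \<iota> (Flip i j) G =
     (let P = \<iota> b * fst (G i) * fst (G j) + snd (G i) * snd (G j)
      in G(i := (inverse P * snd (G j), \<iota> b * inverse P * fst (G i)),
           j := (inverse P * snd (G i), \<iota> b * inverse P * fst (G j))))"

text \<open>Composite of a path pi_1,...,pi_n applied to the generators of the last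
algebra (then embedded): (embedding) o pi_1^ o ... o pi_n^.\<close>

fun path_alg :: "complex \<Rightarrow> complex \<Rightarrow> (complex \<Rightarrow> 'a::division_ring) \<Rightarrow> move list \<Rightarrow> 'a gens \<Rightarrow> 'a gens" where
  "path_alg a b \<iota> [] G = G"
| "path_alg a b \<iota> (p # ps) G = path_alg a b \<iota> ps (move_alg a b \<iota> p G)"

definition paths_agree :: "nat \<Rightarrow> complex \<Rightarrow> complex \<Rightarrow> (complex \<Rightarrow> 'a::division_ring) \<Rightarrow> 'a gens
      \<Rightarrow> dtri \<Rightarrow> move list \<Rightarrow> move list \<Rightarrow> bool" where
  "paths_agree m a b \<iota> g T p1 p2 \<longleftrightarrow>
     is_path m T p1 \<and> is_path m T p2 \<and> path_end T p1 = path_end T p2 \<and>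
     (\<forall>mu<2*m. path_alg a b \<iota> p1 g mu = path_alg a b \<iota> p2 g mu)"

definition omega :: "nat \<Rightarrow> nat \<Rightarrow> move list" where
  "omega mu nu = [Rot nu, Flip mu nu, Rot mu]"

end

theory Submission
  imports Defs
begin

lemma cca_props:
  assumes "central_C_algebra \<iota>"
  shows "\<iota> 1 = 1" "\<iota> (x + y) = \<iota> x + \<iota> y" "\<iota> (x * y) = \<iota> x * \<iota> y" "\<iota> c * z = z * \<iota> c"
  using assms unfolding central_C_algebra_def by blast+

lemma cca_nz:
  assumes "central_C_algebra \<iota>" "x \<noteq> 0"
  shows "\<iota> x \<noteq> 0"
proof
  assume h: "\<iota> x = 0"
  have e: "x * inverse x = 1" using assms(2) by (rule right_inverse)
  have "\<iota> 1 = \<iota> x * \<iota> (inverse x)" unfolding e[symmetric] by (rule cca_props(3)[OF assms(1)])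
  then have "\<iota> 1 = 0" using h by (simp only: mult_zero_left)
  then show False using cca_props(1)[OF assms(1)] by (simp only: one_neq_zero)
qed

lemma inv_comm:
  fixes x P S :: "'a::division_ring"
  assumes "x * P = S * x" "P \<noteq> 0" "S \<noteq> 0"
  shows "x * inverse P = inverse S * x"
proof -
  have "inverse S * x = inverse S * (x * P) * inverse P" using assms(2) by (simp add: mult.assoc)
  also have "\<dots> = inverse S * (S * x) * inverse P" using assms(1) by simp
  also have "\<dots> = x * inverse P" using assms(3) by (simp add: mult.assoc[symmetric])
  finally show ?thesis by simp
qed

lemma sc_rules:
  assumes "central_C_algebra \<iota>"
  shows "NO_MATCH (\<iota> t) x \<Longrightarrow> x * \<iota> s = \<iota> s * x"
    "NO_MATCH (\<iota> t) x \<Longrightarrow> x * (\<iota> s * y) = \<iota> s * (x * y)"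
    "\<iota> s * \<iota> t = \<iota> (s * t)"
    "\<iota> s * (\<iota> t * y) = \<iota> (s * t) * y"
  using cca_props[OF assms] by (metis mult.assoc)+

lemma sc_test:
  fixes Y Z :: "'a::division_ring"
  assumes "central_C_algebra \<iota>" and qc: "Z * Y = \<iota> w * (Y * Z)"
  shows "\<iota> a * Z * (\<iota> b * Y) * Y = \<iota> (a*b) * \<iota> w * (Y * Z * Y)"
proof -
  have qc': "Z * (Y * x) = \<iota> w * (Y * (Z * x))" for x using qc by (metis mult.assoc)
  show ?thesis by (simp add: mult.assoc sc_rules[OF assms(1)] qc' qc ac_simps)
qed

lemma inv_cancel:
  fixes y x :: "'a::division_ring"
  assumes "y \<noteq> 0"
  shows "inverse y * (y * x) = x" "y * (inverse y * x) = x"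
  using assms by (simp_all add: mult.assoc[symmetric])

lemma qc_inv:
  fixes Y Z :: "'a::division_ring"
  assumes cen: "central_C_algebra \<iota>" and qc: "Z * Y = \<iota> w * (Y * Z)" and Y: "Y \<noteq> 0"
  shows "inverse Y * Z = \<iota> w * (Z * inverse Y)"
proof -
  have "inverse Y * Z = inverse Y * (Z * Y) * inverse Y" using Y by (simp add: mult.assoc)
  also have "\<dots> = inverse Y * (\<iota> w * (Y * Z)) * inverse Y" using qc by simp
  also have "\<dots> = \<iota> w * (Z * inverse Y)" using Y
    by (simp add: mult.assoc sc_rules[OF cen] inv_cancel)
  finally show ?thesis .
qed

lemma omega_alg:
  fixes G :: "'a::division_ring gens"
  assumes cen: "central_C_algebra \<iota>" and uv: "u \<noteq> v" and w0: "w \<noteq> 0"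
    and Yv: "fst (G v) \<noteq> 0" and D0: "D \<noteq> 0"
    and c1: "fst (G v) * fst (G u) = fst (G u) * fst (G v)"
    and c2: "fst (G v) * snd (G u) = snd (G u) * fst (G v)"
    and c3: "snd (G v) * fst (G v) = \<iota> w * (fst (G v) * snd (G v))"
    and Ddef: "D = \<iota> (a * b * w) * (fst (G u) * snd (G v)) + snd (G u)"
  shows "path_alg a b \<iota> (omega u v) G = G(u := (\<iota> (a * b) * (fst (G v) * fst (G u)),
                \<iota> (a * b) * (fst (G u) * snd (G v)) + snd (G u)),
             v := (fst (G v) * inverse D * snd (G u),
                \<iota> (a * b) * (fst (G v) * inverse D * inverse (fst (G v)) * snd (G v))))"
proof -
  obtain Yu Zu Yv Zv where gu: "G u = (Yu, Zu)" and gv: "G v = (Yv, Zv)" by (cases "G u", cases "G v") auto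
  have Yv0: "Yv \<noteq> 0" using Yv gv by simp
  note sc = sc_rules[OF cen]
  have c1': "Yv * Yu = Yu * Yv" using c1 gu gv by simp
  have c2': "Yv * Zu = Zu * Yv" using c2 gu gv by simp
  have c3': "Zv * Yv = \<iota> w * (Yv * Zv)" using c3 gu gv by simp
  have qi: "inverse Yv * Zv = \<iota> w * (Zv * inverse Yv)" by (rule qc_inv[OF cen c3' Yv0])
  define P where "P = \<iota> b * Yu * (\<iota> a * inverse Yv * Zv) + Zu * inverse Yv"
  have PD: "P = D * inverse Yv"
    unfolding P_def Ddef gu gv fst_conv snd_conv
    by (simp add: distrib_right mult.assoc sc qi ac_simps)
  have P0: "P \<noteq> 0" using PD D0 Yv0 by simp
  have invP: "inverse P = Yv * inverse D" using PD D0 Yv0 by (simp add: nonzero_inverse_mult_distrib)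
  have invPY: "inverse (inverse P * inverse Yv) = Yv * P" using P0 Yv0 by (simp add: nonzero_inverse_mult_distrib)
  have zi: "Zv * inverse Yv = \<iota> (inverse w) * (inverse Yv * Zv)"
  proof -
    have "\<iota> (inverse w) * (inverse Yv * Zv) = \<iota> (inverse w) * (\<iota> w * (Zv * inverse Yv))" using qi by simp
    also have "\<dots> = \<iota> (inverse w * w) * (Zv * inverse Yv)" by (simp add: sc mult.assoc[symmetric])
    also have "\<dots> = Zv * inverse Yv" using w0 cca_props(1)[OF cen] by simp
    finally show ?thesis by simp
  qed
  have zi': "Zv * (inverse Yv * x) = \<iota> (inverse w) * (inverse Yv * (Zv * x))" for x
    using zi by (simp add: mult.assoc[symmetric])
  have c1'': "Yv * (Yu * x) = Yu * (Yv * x)" for x using c1' by (simp add: mult.assoc[symmetric])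
  have c2'': "Yv * (Zu * x) = Zu * (Yv * x)" for x using c2' by (simp add: mult.assoc[symmetric])
  have G1: "move_alg a b \<iota> (Rot v) G = G(v := (\<iota> a * inverse Yv * Zv, inverse Yv))" using gv by simp
  have G2: "move_alg a b \<iota> (Flip u v) (G(v := (\<iota> a * inverse Yv * Zv, inverse Yv))) =
     (G(v := (\<iota> a * inverse Yv * Zv, inverse Yv)))(u := (inverse P * inverse Yv, \<iota> b * inverse P * Yu),
        v := (inverse P * Zu, \<iota> b * inverse P * (\<iota> a * inverse Yv * Zv)))"
    using gu uv by (simp add: P_def Let_def)
  have e1: "\<iota> a * inverse (inverse P * inverse Yv) * (\<iota> b * inverse P * Yu) = \<iota> (a * b) * (Yv * Yu)"
    unfolding invPY using P0 by (simp add: mult.assoc sc inv_cancel)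
  have e2: "inverse (inverse P * inverse Yv) = \<iota> (a * b) * (Yu * Zv) + Zu"
  proof -
    have "inverse (inverse P * inverse Yv) = Yv * (D * inverse Yv)" using invPY PD by simp
    also have "\<dots> = \<iota> (a * b * w * inverse w) * (Yu * Zv) + Zu" unfolding Ddef gu gv fst_conv snd_conv
      using Yv0 by (simp add: distrib_left distrib_right mult.assoc sc c1'' c2'' zi zi' inv_cancel ac_simps)
    also have "a * b * w * inverse w = a * b" using w0 by simp
    finally show ?thesis .
  qed
  have e1': "\<iota> a * (\<iota> (a * b) * (Yu * Zv) + Zu) * (\<iota> b * inverse P * Yu) = \<iota> (a * b) * (Yv * Yu)"
    using e1 e2 by simp
  have e3: "inverse P * Zu = Yv * inverse D * Zu" unfolding invP ..
  have e4: "\<iota> b * inverse P * (\<iota> a * inverse Yv * Zv) = \<iota> (a * b) * (Yv * inverse D * inverse Yv * Zv)"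
    unfolding invP by (simp add: mult.assoc sc ac_simps)
  have "path_alg a b \<iota> (omega u v) G = move_alg a b \<iota> (Rot u) (move_alg a b \<iota> (Flip u v) (move_alg a b \<iota> (Rot v) G))"
    by (simp add: omega_def)
  also have "\<dots> = G(u := (\<iota> (a * b) * (Yv * Yu), \<iota> (a * b) * (Yu * Zv) + Zu),
             v := (Yv * inverse D * Zu, \<iota> (a * b) * (Yv * inverse D * inverse Yv * Zv)))"
    unfolding G1 G2 using uv by (simp add: e1' e2 e3 e4 fun_upd_twist)
  finally show ?thesis using gu gv by simp
qed

lemma comm_invs:
  fixes a b :: "'a::division_ring"
  assumes h: "a * b = b * a"
  shows "a * inverse b = inverse b * a" "inverse a * b = b * inverse a" "inverse a * inverse b = inverse b * inverse a"
proof -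
  have g: "x * inverse y = inverse y * x" if "x * y = y * x" for x y :: 'a
  proof (cases "y = 0")
    case True then show ?thesis by simp
  next
    case False then show ?thesis using inv_comm[OF that False False] by simp
  qed
  show 1: "a * inverse b = inverse b * a" using g h by blast
  show 2: "inverse a * b = b * inverse a" using g h by metis
  show "inverse a * inverse b = inverse b * inverse a" by (rule g[OF 2])
qed

lemma ctx1: "x * y = y * x \<Longrightarrow> x * (y * r) = y * (x * (r::'a::division_ring))"
  by (metis mult.assoc)
lemma ctx2: "x * y = s * (y * x) \<Longrightarrow> (\<And>z. s * z = z * s) \<Longrightarrow> x * (y * r) = s * (y * (x * (r::'a::division_ring)))"
  by (metis mult.assoc)

lemma cgen1: "(\<And>z. s * z = z * s) \<Longrightarrow> x * s = s * (x::'a::division_ring)"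
  "(\<And>z. s * z = z * s) \<Longrightarrow> x * (s * r) = s * (x * (r::'a::division_ring))"
  by (metis mult.assoc)+

locale pent =
  fixes Yi Zi Yj Zj Yk Zk c W :: "'a::division_ring"
  assumes nz: "Yi \<noteq> 0" "Zi \<noteq> 0" "Yj \<noteq> 0" "Zj \<noteq> 0" "Yk \<noteq> 0" "Zk \<noteq> 0" "c \<noteq> 0" "W \<noteq> 0"
    and cen_c: "\<And>x. c * x = x * c" and cen_W: "\<And>x. W * x = x * W"
    and yy: "Yi * Yj = Yj * Yi" "Yi * Yk = Yk * Yi" "Yj * Yk = Yk * Yj"
    and zz: "Zi * Zj = Zj * Zi" "Zi * Zk = Zk * Zi" "Zj * Zk = Zk * Zj"
    and zy: "Zi * Yj = Yj * Zi" "Zi * Yk = Yk * Zi" "Zj * Yi = Yi * Zj" "Zj * Yk = Yk * Zj"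
        "Zk * Yi = Yi * Zk" "Zk * Yj = Yj * Zk"
    and qq: "Zi * Yi = W * (Yi * Zi)" "Zj * Yj = W * (Yj * Zj)" "Zk * Yk = W * (Yk * Zk)"
begin

lemma cen_all: "W * z = z * W" "inverse W * z = z * inverse W" "c * z = z * c" "inverse c * z = z * inverse c"
  using cen_W cen_c comm_invs(2) by metis+

lemma qinv:
  assumes "Z * Y = W * (Y * Z)" "Y \<noteq> 0"
  shows "Z * inverse Y = inverse W * (inverse Y * Z)"
proof -
  have "inverse W * (inverse Y * Z) = inverse W * (inverse Y * (Z * Y) * inverse Y)" using assms(2) by (simp add: mult.assoc)
  also have "\<dots> = inverse W * (inverse Y * (W * (Y * Z)) * inverse Y)" using assms(1) by simp
  also have "\<dots> = inverse W * W * (inverse Y * Y * Z * inverse Y)" using cen_W by (simp add: mult.assoc)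
  also have "\<dots> = Z * inverse Y" using assms(2) nz(8) by simp
  finally show ?thesis by simp
qed

lemmas base_comm = yy zz zy
lemmas q_rels = qq qinv[OF qq(2) nz(3)] qinv[OF qq(3) nz(5)]

end
lemma (in pent) nr1: "Yj * Yi = Yi * Yj" "Yj * (Yi * r) = Yi * (Yj * r)"
proof -
  have b: "Yj * Yi = Yi * Yj" using base_comm by metis
  show "Yj * Yi = Yi * Yj" by (rule b)
  then show "Yj * (Yi * r) = Yi * (Yj * r)" by (rule ctx1)
qed
lemma (in pent) nr2: "inverse Yj * Yi = Yi * inverse Yj" "inverse Yj * (Yi * r) = Yi * (inverse Yj * r)"
proof -
  have b: "Yj * Yi = Yi * Yj" using base_comm by metis
  show "inverse Yj * Yi = Yi * inverse Yj" by (rule comm_invs(2)[OF b])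
  then show "inverse Yj * (Yi * r) = Yi * (inverse Yj * r)" by (rule ctx1)
qed
lemma (in pent) nr3: "inverse Yj * Yj = 1" "inverse Yj * (Yj * r) = r"
  using nz by (simp_all add: mult.assoc[symmetric])
lemma (in pent) nr4: "Yk * Yi = Yi * Yk" "Yk * (Yi * r) = Yi * (Yk * r)"
proof -
  have b: "Yk * Yi = Yi * Yk" using base_comm by metis
  show "Yk * Yi = Yi * Yk" by (rule b)
  then show "Yk * (Yi * r) = Yi * (Yk * r)" by (rule ctx1)
qed
lemma (in pent) nr5: "Yk * Yj = Yj * Yk" "Yk * (Yj * r) = Yj * (Yk * r)"
proof -
  have b: "Yk * Yj = Yj * Yk" using base_comm by metis
  show "Yk * Yj = Yj * Yk" by (rule b)
  then show "Yk * (Yj * r) = Yj * (Yk * r)" by (rule ctx1)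
qed
lemma (in pent) nr6: "Yk * inverse Yj = inverse Yj * Yk" "Yk * (inverse Yj * r) = inverse Yj * (Yk * r)"
proof -
  have b: "Yk * Yj = Yj * Yk" using base_comm by metis
  show "Yk * inverse Yj = inverse Yj * Yk" by (rule comm_invs(1)[OF b])
  then show "Yk * (inverse Yj * r) = inverse Yj * (Yk * r)" by (rule ctx1)
qed
lemma (in pent) nr7: "inverse Yk * Yi = Yi * inverse Yk" "inverse Yk * (Yi * r) = Yi * (inverse Yk * r)"
proof -
  have b: "Yk * Yi = Yi * Yk" using base_comm by metis
  show "inverse Yk * Yi = Yi * inverse Yk" by (rule comm_invs(2)[OF b])
  then show "inverse Yk * (Yi * r) = Yi * (inverse Yk * r)" by (rule ctx1)
qed
lemma (in pent) nr8: "inverse Yk * Yj = Yj * inverse Yk" "inverse Yk * (Yj * r) = Yj * (inverse Yk * r)"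
proof -
  have b: "Yk * Yj = Yj * Yk" using base_comm by metis
  show "inverse Yk * Yj = Yj * inverse Yk" by (rule comm_invs(2)[OF b])
  then show "inverse Yk * (Yj * r) = Yj * (inverse Yk * r)" by (rule ctx1)
qed
lemma (in pent) nr9: "inverse Yk * inverse Yj = inverse Yj * inverse Yk" "inverse Yk * (inverse Yj * r) = inverse Yj * (inverse Yk * r)"
proof -
  have b: "Yk * Yj = Yj * Yk" using base_comm by metis
  show "inverse Yk * inverse Yj = inverse Yj * inverse Yk" by (rule comm_invs(3)[OF b])
  then show "inverse Yk * (inverse Yj * r) = inverse Yj * (inverse Yk * r)" by (rule ctx1)
qed
lemma (in pent) nr10: "inverse Yk * Yk = 1" "inverse Yk * (Yk * r) = r"
  using nz by (simp_all add: mult.assoc[symmetric])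
lemma (in pent) nr11: "Zi * Yi = W * (Yi * Zi)" "Zi * (Yi * r) = W * (Yi * (Zi * r))"
proof -
  show "Zi * Yi = W * (Yi * Zi)" using q_rels by blast
  then show "Zi * (Yi * r) = W * (Yi * (Zi * r))" by (rule ctx2) (rule cen_all)
qed
lemma (in pent) nr12: "Zi * Yj = Yj * Zi" "Zi * (Yj * r) = Yj * (Zi * r)"
proof -
  have b: "Zi * Yj = Yj * Zi" using base_comm by metis
  show "Zi * Yj = Yj * Zi" by (rule b)
  then show "Zi * (Yj * r) = Yj * (Zi * r)" by (rule ctx1)
qed
lemma (in pent) nr13: "Zi * inverse Yj = inverse Yj * Zi" "Zi * (inverse Yj * r) = inverse Yj * (Zi * r)"
proof -
  have b: "Zi * Yj = Yj * Zi" using base_comm by metis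
  show "Zi * inverse Yj = inverse Yj * Zi" by (rule comm_invs(1)[OF b])
  then show "Zi * (inverse Yj * r) = inverse Yj * (Zi * r)" by (rule ctx1)
qed
lemma (in pent) nr14: "Zi * Yk = Yk * Zi" "Zi * (Yk * r) = Yk * (Zi * r)"
proof -
  have b: "Zi * Yk = Yk * Zi" using base_comm by metis
  show "Zi * Yk = Yk * Zi" by (rule b)
  then show "Zi * (Yk * r) = Yk * (Zi * r)" by (rule ctx1)
qed
lemma (in pent) nr15: "Zi * inverse Yk = inverse Yk * Zi" "Zi * (inverse Yk * r) = inverse Yk * (Zi * r)"
proof -
  have b: "Zi * Yk = Yk * Zi" using base_comm by metis
  show "Zi * inverse Yk = inverse Yk * Zi" by (rule comm_invs(1)[OF b])
  then show "Zi * (inverse Yk * r) = inverse Yk * (Zi * r)" by (rule ctx1)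
qed
lemma (in pent) nr16: "Zj * Yi = Yi * Zj" "Zj * (Yi * r) = Yi * (Zj * r)"
proof -
  have b: "Zj * Yi = Yi * Zj" using base_comm by metis
  show "Zj * Yi = Yi * Zj" by (rule b)
  then show "Zj * (Yi * r) = Yi * (Zj * r)" by (rule ctx1)
qed
lemma (in pent) nr17: "Zj * Yj = W * (Yj * Zj)" "Zj * (Yj * r) = W * (Yj * (Zj * r))"
proof -
  show "Zj * Yj = W * (Yj * Zj)" using q_rels by blast
  then show "Zj * (Yj * r) = W * (Yj * (Zj * r))" by (rule ctx2) (rule cen_all)
qed
lemma (in pent) nr18: "Zj * inverse Yj = inverse W * (inverse Yj * Zj)" "Zj * (inverse Yj * r) = inverse W * (inverse Yj * (Zj * r))"
proof -
  show "Zj * inverse Yj = inverse W * (inverse Yj * Zj)" using q_rels by blast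
  then show "Zj * (inverse Yj * r) = inverse W * (inverse Yj * (Zj * r))" by (rule ctx2) (rule cen_all)
qed
lemma (in pent) nr19: "Zj * Yk = Yk * Zj" "Zj * (Yk * r) = Yk * (Zj * r)"
proof -
  have b: "Zj * Yk = Yk * Zj" using base_comm by metis
  show "Zj * Yk = Yk * Zj" by (rule b)
  then show "Zj * (Yk * r) = Yk * (Zj * r)" by (rule ctx1)
qed
lemma (in pent) nr20: "Zj * inverse Yk = inverse Yk * Zj" "Zj * (inverse Yk * r) = inverse Yk * (Zj * r)"
proof -
  have b: "Zj * Yk = Yk * Zj" using base_comm by metis
  show "Zj * inverse Yk = inverse Yk * Zj" by (rule comm_invs(1)[OF b])
  then show "Zj * (inverse Yk * r) = inverse Yk * (Zj * r)" by (rule ctx1)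
qed
lemma (in pent) nr21: "Zj * Zi = Zi * Zj" "Zj * (Zi * r) = Zi * (Zj * r)"
proof -
  have b: "Zj * Zi = Zi * Zj" using base_comm by metis
  show "Zj * Zi = Zi * Zj" by (rule b)
  then show "Zj * (Zi * r) = Zi * (Zj * r)" by (rule ctx1)
qed
lemma (in pent) nr22: "Zk * Yi = Yi * Zk" "Zk * (Yi * r) = Yi * (Zk * r)"
proof -
  have b: "Zk * Yi = Yi * Zk" using base_comm by metis
  show "Zk * Yi = Yi * Zk" by (rule b)
  then show "Zk * (Yi * r) = Yi * (Zk * r)" by (rule ctx1)
qed
lemma (in pent) nr23: "Zk * Yj = Yj * Zk" "Zk * (Yj * r) = Yj * (Zk * r)"
proof -
  have b: "Zk * Yj = Yj * Zk" using base_comm by metis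
  show "Zk * Yj = Yj * Zk" by (rule b)
  then show "Zk * (Yj * r) = Yj * (Zk * r)" by (rule ctx1)
qed
lemma (in pent) nr24: "Zk * inverse Yj = inverse Yj * Zk" "Zk * (inverse Yj * r) = inverse Yj * (Zk * r)"
proof -
  have b: "Zk * Yj = Yj * Zk" using base_comm by metis
  show "Zk * inverse Yj = inverse Yj * Zk" by (rule comm_invs(1)[OF b])
  then show "Zk * (inverse Yj * r) = inverse Yj * (Zk * r)" by (rule ctx1)
qed
lemma (in pent) nr25: "Zk * Yk = W * (Yk * Zk)" "Zk * (Yk * r) = W * (Yk * (Zk * r))"
proof -
  show "Zk * Yk = W * (Yk * Zk)" using q_rels by blast
  then show "Zk * (Yk * r) = W * (Yk * (Zk * r))" by (rule ctx2) (rule cen_all)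
qed
lemma (in pent) nr26: "Zk * inverse Yk = inverse W * (inverse Yk * Zk)" "Zk * (inverse Yk * r) = inverse W * (inverse Yk * (Zk * r))"
proof -
  show "Zk * inverse Yk = inverse W * (inverse Yk * Zk)" using q_rels by blast
  then show "Zk * (inverse Yk * r) = inverse W * (inverse Yk * (Zk * r))" by (rule ctx2) (rule cen_all)
qed
lemma (in pent) nr27: "Zk * Zi = Zi * Zk" "Zk * (Zi * r) = Zi * (Zk * r)"
proof -
  have b: "Zk * Zi = Zi * Zk" using base_comm by metis
  show "Zk * Zi = Zi * Zk" by (rule b)
  then show "Zk * (Zi * r) = Zi * (Zk * r)" by (rule ctx1)
qed
lemma (in pent) nr28: "Zk * Zj = Zj * Zk" "Zk * (Zj * r) = Zj * (Zk * r)"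
proof -
  have b: "Zk * Zj = Zj * Zk" using base_comm by metis
  show "Zk * Zj = Zj * Zk" by (rule b)
  then show "Zk * (Zj * r) = Zj * (Zk * r)" by (rule ctx1)
qed
lemma (in pent) nr29: "Yj * inverse Yj = 1" "Yj * (inverse Yj * r) = r"
  using nz by (simp_all add: mult.assoc[symmetric])
lemma (in pent) nr30: "Yk * inverse Yk = 1" "Yk * (inverse Yk * r) = r"
  using nz by (simp_all add: mult.assoc[symmetric])
lemmas (in pent) norm_rules = nr1 nr2 nr3 nr4 nr5 nr6 nr7 nr8 nr9 nr10 nr11 nr12 nr13 nr14 nr15 nr16 nr17 nr18 nr19 nr20 nr21 nr22 nr23 nr24 nr25 nr26 nr27 nr28 nr29 nr30
lemma (in pent) sr1: "NO_MATCH (c) x \<Longrightarrow> NO_MATCH (inverse c) x \<Longrightarrow> NO_MATCH (W) x \<Longrightarrow> NO_MATCH (inverse W) x \<Longrightarrow> x * c = c * x" "NO_MATCH (c) x \<Longrightarrow> NO_MATCH (inverse c) x \<Longrightarrow> NO_MATCH (W) x \<Longrightarrow> NO_MATCH (inverse W) x \<Longrightarrow> x * (c * r) = c * (x * r)"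
  by (rule cgen1, rule cen_all(3))+
lemma (in pent) sr2: "NO_MATCH (c) x \<Longrightarrow> NO_MATCH (inverse c) x \<Longrightarrow> NO_MATCH (W) x \<Longrightarrow> NO_MATCH (inverse W) x \<Longrightarrow> x * inverse c = inverse c * x" "NO_MATCH (c) x \<Longrightarrow> NO_MATCH (inverse c) x \<Longrightarrow> NO_MATCH (W) x \<Longrightarrow> NO_MATCH (inverse W) x \<Longrightarrow> x * (inverse c * r) = inverse c * (x * r)"
  by (rule cgen1, rule cen_all(4))+
lemma (in pent) sr3: "NO_MATCH (c) x \<Longrightarrow> NO_MATCH (inverse c) x \<Longrightarrow> NO_MATCH (W) x \<Longrightarrow> NO_MATCH (inverse W) x \<Longrightarrow> x * W = W * x" "NO_MATCH (c) x \<Longrightarrow> NO_MATCH (inverse c) x \<Longrightarrow> NO_MATCH (W) x \<Longrightarrow> NO_MATCH (inverse W) x \<Longrightarrow> x * (W * r) = W * (x * r)"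
  by (rule cgen1, rule cen_all(1))+
lemma (in pent) sr4: "NO_MATCH (c) x \<Longrightarrow> NO_MATCH (inverse c) x \<Longrightarrow> NO_MATCH (W) x \<Longrightarrow> NO_MATCH (inverse W) x \<Longrightarrow> x * inverse W = inverse W * x" "NO_MATCH (c) x \<Longrightarrow> NO_MATCH (inverse c) x \<Longrightarrow> NO_MATCH (W) x \<Longrightarrow> NO_MATCH (inverse W) x \<Longrightarrow> x * (inverse W * r) = inverse W * (x * r)"
  by (rule cgen1, rule cen_all(2))+
lemma (in pent) sr5: "inverse c * c = 1" "inverse c * (c * r) = r"
  using nz by (simp_all add: mult.assoc[symmetric])
lemma (in pent) sr6: "W * c = c * W" "W * (c * r) = c * (W * r)"
  by (rule cgen1, rule cen_all(3))+
lemma (in pent) sr7: "W * inverse c = inverse c * W" "W * (inverse c * r) = inverse c * (W * r)"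
  by (rule cgen1, rule cen_all(4))+
lemma (in pent) sr8: "inverse W * c = c * inverse W" "inverse W * (c * r) = c * (inverse W * r)"
  by (rule cgen1, rule cen_all(3))+
lemma (in pent) sr9: "inverse W * inverse c = inverse c * inverse W" "inverse W * (inverse c * r) = inverse c * (inverse W * r)"
  by (rule cgen1, rule cen_all(4))+
lemma (in pent) sr10: "inverse W * W = 1" "inverse W * (W * r) = r"
  using nz by (simp_all add: mult.assoc[symmetric])
lemma (in pent) sr11: "c * inverse c = 1" "c * (inverse c * r) = r"
  using nz by (simp_all add: mult.assoc[symmetric])
lemma (in pent) sr12: "W * inverse W = 1" "W * (inverse W * r) = r"
  using nz by (simp_all add: mult.assoc[symmetric])
lemmas (in pent) sc_norm = sr1 sr2 sr3 sr4 sr5 sr6 sr7 sr8 sr9 sr10 sr11 sr12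

lemmas (in pent) NR = norm_rules sc_norm distrib_left distrib_right mult.assoc mult_1_left mult_1_right add.assoc

context pent begin
definition "E1 = c * W * (Yi * Zj) + Zi"
definition "E1p = c * (Yi * Zj) + Zi"
definition "D1 = c * W * (Yj * Zk) + Zj"
definition "D1p = c * (Yj * Zk) + Zj"
definition "D2 = c * W * (Yi * D1p) + Zi"
definition "E2 = c * W * (c * (Yj * Yi) * Zk) + E1p"
definition "F = c * c * (Yj * (Yi * Zk)) + E1p"
definition "Gp = c * c * (Yi * (Yj * Zk)) + E1"

lemma P1: "E1p * Yj = Yj * E1"
  unfolding E1p_def E1_def by (simp add: NR add_ac)
lemma P2: "Zi * F = D2 * Zi"
  unfolding F_def D2_def D1p_def E1p_def by (simp add: NR add_ac)
lemma P2b: "Yk * E2 = F * Yk"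
  unfolding F_def E2_def E1p_def by (simp add: NR add_ac)
lemma P3: "Yj * D2 = E2 * Yj"
  unfolding E2_def D2_def D1p_def E1p_def by (simp add: NR add_ac)
lemma P4: "D2 * E1 = E1 * Gp"
  unfolding Gp_def D2_def D1p_def E1_def by (simp add: NR add_ac)
lemma P4b: "Yk * D2 = Gp * Yk"
  unfolding Gp_def D2_def D1p_def E1_def by (simp add: NR add_ac)
lemma P5: "E2 * D1 = D1 * E2"
  unfolding E2_def D1_def E1p_def by (simp add: NR add_ac)
lemma SC: "c * (Zi * Zk) + D2 * (inverse Yj * Zj) = E1 * (inverse Yj * D1p)"
  unfolding E1_def D2_def D1p_def by (simp add: NR add_ac)
lemma SC2: "c * W * (Zi * Zk) + D2 * (inverse Yj * Zj) = inverse Yj * (D1 * E1p)"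
  unfolding E1p_def D2_def D1p_def D1_def by (simp add: NR add_ac)
end

locale pent2 = pent +
  assumes nE1: "E1 \<noteq> 0" and nD1: "D1 \<noteq> 0" and nD2: "D2 \<noteq> 0" and nE2: "E2 \<noteq> 0"
begin

lemma nE1p: "E1p \<noteq> 0"
proof
  assume "E1p = 0" then have "Yj * E1 = 0" using P1 by simp
  then show False using nE1 nz by simp
qed
lemma nF: "F \<noteq> 0"
proof
  assume "F = 0" then have "Yk * E2 = 0" using P2b by simp
  then show False using nE2 nz by simp
qed
lemma nGp: "Gp \<noteq> 0"
proof
  assume "Gp = 0" then have "Yk * D2 = 0" using P4b by simp
  then show False using nD2 nz by simp
qed

lemma a1: "E1p * (Yj * (inverse E1 * r)) = Yj * r"
proof -
  have "E1p * (Yj * (inverse E1 * r)) = (E1p * Yj) * inverse E1 * r" by (simp add: mult.assoc)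
  also have "\<dots> = Yj * r" unfolding P1 using nE1 by (simp add: mult.assoc)
  finally show ?thesis .
qed
lemma a2: "inverse E2 * (Yj * r) = Yj * (inverse D2 * r)"
  using inv_comm[OF P3 nD2 nE2] by (simp add: mult.assoc[symmetric])
lemma b1: "Yk * (inverse E2 * (inverse Yk * r)) = inverse F * r"
proof -
  have "Yk * inverse E2 = inverse F * Yk" by (rule inv_comm[OF P2b nE2 nF])
  then have "Yk * (inverse E2 * (inverse Yk * r)) = inverse F * (Yk * (inverse Yk * r))"
    by (simp add: mult.assoc[symmetric])
  then show ?thesis using nz by (simp add: inv_cancel)
qed
lemma b2: "Zi * (inverse F * r) = inverse D2 * (Zi * r)"
  using inv_comm[OF P2 nF nD2] by (simp add: mult.assoc[symmetric])

lemma Z1: "Yj * inverse E1 * Zi * (c * (Yk * inverse E2 * inverse Yk * Zk)) =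
   c * (Yj * (inverse E1 * (inverse D2 * (Zi * Zk))))"
  by (simp add: mult.assoc b1 b2 sc_norm)


lemma c1: "inverse E1 * (inverse D2 * (E1 * r)) = inverse Gp * r"
proof -
  have "inverse (D2 * E1) = inverse (E1 * Gp)" using P4 by simp
  then have "inverse E1 * inverse D2 = inverse Gp * inverse E1"
    using nE1 nD2 nGp by (simp add: nonzero_inverse_mult_distrib)
  then have "inverse E1 * (inverse D2 * (E1 * r)) = inverse Gp * (inverse E1 * (E1 * r))"
    by (simp add: mult.assoc[symmetric])
  then show ?thesis using nE1 by (simp add: inv_cancel)
qed
lemma c2: "Yk * (inverse D2 * r) = inverse Gp * (Yk * r)"
  using inv_comm[OF P4b nD2 nGp] by (simp add: mult.assoc[symmetric])

lemma G_Zj: "c * (Yj * inverse E1 * Zi * (c * (Yk * inverse E2 * inverse Yk * Zk))) + c * (Yj * inverse E1 * inverse Yj * Zj)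
   = c * (c * (Yk * Yj) * inverse D2 * inverse (c * (Yk * Yj)) * D1p)"
proof -
  have "c * (Yj * inverse E1 * Zi * (c * (Yk * inverse E2 * inverse Yk * Zk))) + c * (Yj * inverse E1 * inverse Yj * Zj)
     = c * (Yj * (inverse E1 * (inverse D2 * (c * (Zi * Zk) + D2 * (inverse Yj * Zj)))))"
    unfolding Z1 using nD2 by (simp add: mult.assoc distrib_left sc_norm inv_cancel)
  also have "\<dots> = c * (Yj * (inverse E1 * (inverse D2 * (E1 * (inverse Yj * D1p)))))" unfolding SC ..
  also have "\<dots> = c * (Yj * (inverse Gp * (inverse Yj * D1p)))" unfolding c1 ..
  also have "\<dots> = c * (c * (Yk * Yj) * inverse D2 * inverse (c * (Yk * Yj)) * D1p)"
  proof -
    have "inverse (c * (Yk * Yj)) = inverse Yj * (inverse Yk * inverse c)" using nz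
      by (simp add: nonzero_inverse_mult_distrib mult.assoc)
    then show ?thesis using nz
      by (simp add: mult.assoc c2 norm_rules sc_norm)
  qed
  finally show ?thesis .
qed


lemma E3f: "c * W * (Yj * inverse E1 * Zi * (c * (Yk * inverse E2 * inverse Yk * Zk))) + c * (Yj * inverse E1 * inverse Yj * Zj)
     = c * (Yj * (inverse E1 * (inverse D2 * (inverse Yj * (D1 * E1p)))))"
proof -
  have "c * W * (Yj * inverse E1 * Zi * (c * (Yk * inverse E2 * inverse Yk * Zk))) + c * (Yj * inverse E1 * inverse Yj * Zj)
     = c * (Yj * (inverse E1 * (inverse D2 * (c * W * (Zi * Zk) + D2 * (inverse Yj * Zj)))))"
    unfolding Z1 using nD2 by (simp add: mult.assoc distrib_left sc_norm inv_cancel)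
  also have "\<dots> = c * (Yj * (inverse E1 * (inverse D2 * (inverse Yj * (D1 * E1p)))))" unfolding SC2 ..
  finally show ?thesis .
qed

lemma nE3: "c * (Yj * (inverse E1 * (inverse D2 * (inverse Yj * (D1 * E1p))))) \<noteq> 0"
  using nz nE1 nD2 nD1 nE1p by simp

lemma invE3: "inverse (c * (Yj * (inverse E1 * (inverse D2 * (inverse Yj * (D1 * E1p))))))
  = inverse E1p * (inverse D1 * (Yj * (D2 * (E1 * (inverse Yj * inverse c)))))"
  using nz nE1 nD2 nD1 nE1p by (simp add: nonzero_inverse_mult_distrib mult.assoc)

lemma d1: "Yj * (D2 * (inverse Yj * r)) = E2 * r"
  using P3 nz by (simp add: mult.assoc[symmetric]) (simp add: mult.assoc inv_cancel)
lemma d2: "inverse D1 * (E2 * r) = E2 * (inverse D1 * r)"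
  using inv_comm[OF P5 nD1 nD1] by (simp add: mult.assoc[symmetric])
lemma d3: "Yj * (D2 * (E1 * (inverse Yj * r))) = E2 * (E1p * r)"
proof -
  have "Yj * (D2 * (E1 * (inverse Yj * r))) = E2 * (Yj * (E1 * (inverse Yj * r)))"
    using P3 by (simp add: mult.assoc[symmetric])
  also have "\<dots> = E2 * (E1p * (Yj * (inverse Yj * r)))" using P1 by (simp add: mult.assoc[symmetric])
  also have "\<dots> = E2 * (E1p * r)" using nz by (simp add: inv_cancel)
  finally show ?thesis .
qed

lemma G_Yk: "Yk * inverse E2 * E1p * inverse (c * (Yj * (inverse E1 * (inverse D2 * (inverse Yj * (D1 * E1p))))))
     * (c * (Yj * inverse E1 * inverse Yj * Zj)) = Yk * inverse D1 * Zj"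
proof -
  have "Yk * inverse E2 * E1p * inverse (c * (Yj * (inverse E1 * (inverse D2 * (inverse Yj * (D1 * E1p))))))
     * (c * (Yj * inverse E1 * inverse Yj * Zj)) =
     Yk * (inverse E2 * (inverse D1 * (Yj * (D2 * (inverse Yj * Zj)))))"
    unfolding invE3 using nz nE1 nE1p by (simp add: mult.assoc inv_cancel sc_norm)
  also have "\<dots> = Yk * inverse D1 * Zj" using nE2 by (simp add: d1 d2 inv_cancel mult.assoc)
  finally show ?thesis .
qed

lemma G_Zk: "c * (Yk * inverse E2 * E1p * inverse (c * (Yj * (inverse E1 * (inverse D2 * (inverse Yj * (D1 * E1p))))))
     * inverse (Yk * inverse E2 * E1p) * (c * (Yk * inverse E2 * inverse Yk * Zk)))
     = c * (Yk * inverse D1 * inverse Yk * Zk)"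
proof -
  have i2: "inverse (Yk * inverse E2 * E1p) = inverse E1p * (E2 * inverse Yk)"
    using nz nE2 nE1p by (simp add: nonzero_inverse_mult_distrib mult.assoc)
  have "c * (Yk * inverse E2 * E1p * inverse (c * (Yj * (inverse E1 * (inverse D2 * (inverse Yj * (D1 * E1p))))))
     * inverse (Yk * inverse E2 * E1p) * (c * (Yk * inverse E2 * inverse Yk * Zk)))
     = c * (Yk * (inverse E2 * (inverse D1 * (Yj * (D2 * (E1 * (inverse Yj * (inverse E1p * (E2 * (inverse E2 * (inverse Yk * Zk)))))))))))"
    unfolding invE3 i2 using nz nE1 nE1p by (simp add: mult.assoc inv_cancel sc_norm)
  also have "\<dots> = c * (Yk * inverse D1 * inverse Yk * Zk)" using nE2 nE1p by (simp add: d3 d2 inv_cancel mult.assoc)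
  finally show ?thesis .
qed

lemma G_Yj: "c * (Yk * inverse E2 * E1p * (Yj * inverse E1 * Zi)) = c * (Yk * Yj) * inverse D2 * Zi"
  by (simp add: mult.assoc a1 a2)

lemma G_Yi: "c * (Yk * (c * (Yj * Yi))) = c * (c * (Yk * Yj) * Yi)"
  by (simp add: NR)
lemma G_Zi: "c * (c * (Yj * Yi) * Zk) + (c * (Yi * Zj) + Zi) = c * (Yi * (c * (Yj * Zk) + Zj)) + Zi"
  by (simp add: NR add_ac)


end

context pent begin
lemma Q1: "E1p * F = E2 * E1p"
  unfolding F_def E2_def E1p_def by (simp add: NR add_ac)
lemma Q2: "D1p * (c * (Yk * Yj)) = W * (c * (Yk * Yj) * D1p)"
  unfolding D1p_def by (simp add: NR add_ac)
lemma P6: "D1p * Yk = Yk * D1"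
  unfolding D1p_def D1_def by (simp add: NR add_ac)
lemma K1: "Zk * E2 = E2 * Zk"
  unfolding E2_def E1p_def by (simp add: NR add_ac)
lemma K2: "Zk * E1p = E1p * Zk"
  unfolding E1p_def by (simp add: NR add_ac)
lemma NF_E1: "E1 = c * W * (Yi * Zj) + Zi" by (simp add: E1_def)
lemma NF_D1: "D1 = c * W * (Yj * Zk) + Zj" by (simp add: D1_def)
lemma NF_D2: "D2 = c * c * W * (Yi * Yj * Zk) + c * W * (Yi * Zj) + Zi"
  unfolding D2_def D1p_def by (simp add: NR add_ac)
lemma NF_E2: "E2 = c * c * W * (Yi * Yj * Zk) + c * (Yi * Zj) + Zi"
  unfolding E2_def E1p_def by (simp add: NR add_ac)
lemma pw1: "c * (c * (Yk * Yj) * Yi) = c * (c * (Yk * Yj) * Yi)" ..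
lemma pc1: "c * (Yk * Yj) * Yi = Yi * (c * (Yk * Yj))" by (simp add: NR)
lemma pc2: "c * (Yk * Yj) * Zi = Zi * (c * (Yk * Yj))" by (simp add: NR)
lemma pc3: "Yk * (c * (Yj * Yi)) = c * (Yj * Yi) * Yk" by (simp add: NR)
lemma pc4: "Yk * E1p = E1p * Yk" unfolding E1p_def by (simp add: NR add_ac)
end

context pent2 begin
lemma a3: "Yj * (inverse D2 * (inverse Yj * r)) = inverse E2 * r"
proof -
  have "Yj * inverse D2 = inverse E2 * Yj" by (rule inv_comm[OF P3 nD2 nE2])
  then have "Yj * (inverse D2 * (inverse Yj * r)) = inverse E2 * (Yj * (inverse Yj * r))"
    by (simp add: mult.assoc[symmetric])
  then show ?thesis using nz by (simp add: inv_cancel)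
qed
lemma e5: "D1 * (inverse Yk * r) = inverse Yk * (D1p * r)"
proof -
  have "D1 * (inverse Yk * r) = inverse Yk * ((Yk * D1) * (inverse Yk * r))" using nz by (simp add: mult.assoc inv_cancel)
  also have "\<dots> = inverse Yk * (D1p * r)" unfolding P6[symmetric] using nz by (simp add: mult.assoc inv_cancel)
  finally show ?thesis .
qed
lemma p5: "inverse E2 * (D1 * (E2 * r)) = D1 * r"
proof -
  have "inverse E2 * (D1 * (E2 * r)) = inverse E2 * ((D1 * E2) * r)" by (simp add: mult.assoc)
  also have "\<dots> = inverse E2 * (E2 * (D1 * r))" unfolding P5[symmetric] by (simp add: mult.assoc)
  also have "\<dots> = D1 * r" using nE2 by (simp add: inv_cancel)
  finally show ?thesis .
qed

lemma G_Zj2: "Yk * inverse E2 * E1p * (c * (Yj * (inverse E1 * (inverse D2 * (inverse Yj * (D1 * E1p))))))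
    * inverse (Yk * inverse E2 * E1p) = c * (c * (Yk * Yj) * inverse D2 * inverse (c * (Yk * Yj)) * D1p)"
proof -
  have i2: "inverse (Yk * inverse E2 * E1p) = inverse E1p * (E2 * inverse Yk)"
    using nz nE2 nE1p by (simp add: nonzero_inverse_mult_distrib mult.assoc)
  have i3: "inverse (c * (Yk * Yj)) = inverse Yj * (inverse Yk * inverse c)" using nz
    by (simp add: nonzero_inverse_mult_distrib mult.assoc)
  have "Yk * inverse E2 * E1p * (c * (Yj * (inverse E1 * (inverse D2 * (inverse Yj * (D1 * E1p))))))
    * inverse (Yk * inverse E2 * E1p) = c * (Yk * (inverse E2 * (E1p * (Yj * (inverse E1 * (inverse D2 * (inverse Yj * (D1 * (E2 * inverse Yk)))))))))"
    unfolding i2 using nE1p by (simp add: mult.assoc sc_norm inv_cancel)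
  also have "\<dots> = c * (Yk * (inverse E2 * D1) * inverse Yk)" by (simp add: a1 a3 p5 mult.assoc)
  also have "\<dots> = c * (Yk * (Yj * (inverse D2 * (inverse Yj * (inverse Yk * D1p)))))"
    using e5[of 1] by (simp add: a3 mult.assoc)
  also have "\<dots> = c * (c * (Yk * Yj) * inverse D2 * inverse (c * (Yk * Yj)) * D1p)"
    unfolding i3 by (simp add: mult.assoc sc_norm)
  finally show ?thesis .
qed

lemma Q1i: "E1p * (inverse F * r) = inverse E2 * (E1p * r)"
  using inv_comm[OF Q1 nF nE2] by (simp add: mult.assoc[symmetric])
lemma K1i: "Zk * (inverse E2 * r) = inverse E2 * (Zk * r)"
  using comm_invs(1)[OF K1] by (simp add: mult.assoc[symmetric])
lemma K2c: "Zk * (E1p * r) = E1p * (Zk * r)"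
  using K2 by (simp add: mult.assoc[symmetric])

lemma C3: "c * (Yk * inverse E2 * inverse Yk * Zk) * (Yk * inverse E2 * E1p) =
   W * (Yk * inverse E2 * E1p * (c * (Yk * inverse E2 * inverse Yk * Zk)))"
proof -
  have "c * (Yk * inverse E2 * inverse Yk * Zk) * (Yk * inverse E2 * E1p) = c * (W * (Yk * (inverse E2 * (inverse E2 * (E1p * Zk)))))"
    by (simp add: mult.assoc nr25 nr10 K1i K2c K2 sc_norm)
  also have "\<dots> = W * (Yk * inverse E2 * E1p * (c * (Yk * inverse E2 * inverse Yk * Zk)))"
    by (simp add: mult.assoc b1 Q1i sc_norm)
  finally show ?thesis .
qed
end

locale duo =
  fixes Yi Zi Yj Zj B W :: "'a::division_ring"
  assumes dnz: "Yi \<noteq> 0" "Zi \<noteq> 0" "Yj \<noteq> 0" "Zj \<noteq> 0" "B \<noteq> 0" "W \<noteq> 0"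
    and cen_B: "\<And>x. B * x = x * B" and cen_W: "\<And>x. W * x = x * W"
    and dcomm: "Yi * Yj = Yj * Yi" "Zi * Zj = Zj * Zi" "Zi * Yj = Yj * Zi" "Zj * Yi = Yi * Zj"
    and dq: "Zi * Yi = W * (Yi * Zi)" "Zj * Yj = W * (Yj * Zj)"
lemma (in duo) dr1: "Yj * Yi = Yi * Yj" "Yj * (Yi * r) = Yi * (Yj * r)"
proof -
  show b: "Yj * Yi = Yi * Yj" using dcomm by metis
  then show "Yj * (Yi * r) = Yi * (Yj * r)" by (rule ctx1)
qed
lemma (in duo) dr2: "Zi * Yi = W * (Yi * Zi)" "Zi * (Yi * r) = W * (Yi * (Zi * r))"
proof -
  show "Zi * Yi = W * (Yi * Zi)" using dq by blast
  then show "Zi * (Yi * r) = W * (Yi * (Zi * r))" by (rule ctx2) (rule cen_W)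
qed
lemma (in duo) dr3: "Zi * Yj = Yj * Zi" "Zi * (Yj * r) = Yj * (Zi * r)"
proof -
  show b: "Zi * Yj = Yj * Zi" using dcomm by metis
  then show "Zi * (Yj * r) = Yj * (Zi * r)" by (rule ctx1)
qed
lemma (in duo) dr4: "Zj * Yi = Yi * Zj" "Zj * (Yi * r) = Yi * (Zj * r)"
proof -
  show b: "Zj * Yi = Yi * Zj" using dcomm by metis
  then show "Zj * (Yi * r) = Yi * (Zj * r)" by (rule ctx1)
qed
lemma (in duo) dr5: "Zj * Yj = W * (Yj * Zj)" "Zj * (Yj * r) = W * (Yj * (Zj * r))"
proof -
  show "Zj * Yj = W * (Yj * Zj)" using dq by blast
  then show "Zj * (Yj * r) = W * (Yj * (Zj * r))" by (rule ctx2) (rule cen_W)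
qed
lemma (in duo) dr6: "Zj * Zi = Zi * Zj" "Zj * (Zi * r) = Zi * (Zj * r)"
proof -
  show b: "Zj * Zi = Zi * Zj" using dcomm by metis
  then show "Zj * (Zi * r) = Zi * (Zj * r)" by (rule ctx1)
qed
lemma (in duo) dr7: "NO_MATCH (B) x \<Longrightarrow> NO_MATCH (W) x \<Longrightarrow> x * B = B * x" "NO_MATCH (B) x \<Longrightarrow> NO_MATCH (W) x \<Longrightarrow> x * (B * r) = B * (x * r)"
  by (rule cgen1, rule cen_B)+
lemma (in duo) dr8: "NO_MATCH (B) x \<Longrightarrow> NO_MATCH (W) x \<Longrightarrow> x * W = W * x" "NO_MATCH (B) x \<Longrightarrow> NO_MATCH (W) x \<Longrightarrow> x * (W * r) = W * (x * r)"
  by (rule cgen1, rule cen_W)+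
lemma (in duo) dr9: "W * B = B * W" "W * (B * r) = B * (W * r)"
  by (rule cgen1, rule cen_B)+
lemmas (in duo) DR = dr1 dr2 dr3 dr4 dr5 dr6 dr7 dr8 dr9 distrib_left distrib_right mult.assoc mult_1_left mult_1_right add.assoc

context duo begin
definition "P = B * Yi * Yj + Zi * Zj"
definition "R = W * (B * (Yi * Yj)) + Zi * Zj"
lemma I1: "Zj * P = R * Zj" unfolding P_def R_def by (simp add: DR add_ac)
lemma I2: "W * (Yi * P) = R * Yi" unfolding P_def R_def by (simp add: DR add_ac)
lemma I3: "Zj * Zi + B * (W * (Yi * Yj)) = R" unfolding R_def by (simp add: DR add_ac)
end

context duo begin
lemma Pp:
  assumes P0: "P \<noteq> 0"
  shows "B * (inverse P * Zj) * (inverse P * Zi) + B * inverse P * Yi * (B * inverse P * Yj) = B * inverse P"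
proof -
  have R0: "R \<noteq> 0"
  proof
    assume "R = 0" then have "Zj * P = 0" using I1 by simp
    then show False using P0 dnz by simp
  qed
  have h1: "Zj * inverse P = inverse R * Zj" by (rule inv_comm[OF I1 P0 R0])
  have I2': "Yi * P = (inverse W * R) * Yi"
  proof -
    have "Yi * P = inverse W * (W * (Yi * P))" using dnz by (simp add: inv_cancel)
    then show ?thesis unfolding I2 by (simp add: mult.assoc)
  qed
  have h2: "Yi * inverse P = inverse R * (W * Yi)"
    using inv_comm[OF I2' P0] R0 dnz by (simp add: nonzero_inverse_mult_distrib mult.assoc)
  have "B * (inverse P * Zj) * (inverse P * Zi) + B * inverse P * Yi * (B * inverse P * Yj)
     = B * (inverse P * (inverse R * (Zj * Zi + B * (W * (Yi * Yj)))))"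
    using h1 h2 by (simp add: mult.assoc[symmetric]) (simp add: mult.assoc distrib_left DR)
  also have "\<dots> = B * inverse P" unfolding I3 using R0 by simp
  finally show ?thesis .
qed
end

lemma prod_two:
  fixes F :: "nat \<Rightarrow> 'a::monoid_mult"
  assumes "distinct xs" "u \<noteq> v" "\<forall>x\<in>set xs. x \<noteq> u \<and> x \<noteq> v \<longrightarrow> F x = 1" "F u * F v = F v * F u"
  shows "prod_list (map F xs) = (if u \<in> set xs then F u else 1) * (if v \<in> set xs then F v else 1)"
  using assms
proof (induction xs)
  case Nil then show ?case by simp
next
  case (Cons x xs)
  then have IH: "prod_list (map F xs) = (if u \<in> set xs then F u else 1) * (if v \<in> set xs then F v else 1)" by simp
  show ?case
  proof (cases "x = u")
    case True then show ?thesis using Cons.prems IH by (auto simp: mult.assoc)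
  next
    case False
    show ?thesis
    proof (cases "x = v")
      case True
      then have "u \<noteq> x" using Cons.prems by auto
      then show ?thesis using Cons.prems IH True
        by (auto simp: mult.assoc[symmetric])
    next
      case False
      then show ?thesis using Cons.prems IH \<open>x \<noteq> u\<close> by auto
    qed
  qed
qed

definition ind0 :: "nat \<Rightarrow> int" where "ind0 = (\<lambda>_. 0)"
definition ind1 :: "nat \<Rightarrow> nat \<Rightarrow> int" where "ind1 u = (\<lambda>x. if x = u then 1 else 0)"
definition ind2 :: "nat \<Rightarrow> nat \<Rightarrow> nat \<Rightarrow> int" where "ind2 u v = (\<lambda>x. if x = u \<or> x = v then 1 else 0)"

lemma prodl_ind:
  fixes h :: "nat \<Rightarrow> 'a::division_ring"
  assumes "\<forall>mu<n. \<forall>nu<n. mu \<noteq> nu \<longrightarrow> h mu * h nu = h nu * h mu"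
  shows "prod_list (map (\<lambda>mu. h mu powi ind0 mu) [0..<n]) = 1"
    "u < n \<Longrightarrow> prod_list (map (\<lambda>mu. h mu powi ind1 u mu) [0..<n]) = h u"
    "u < n \<Longrightarrow> v < n \<Longrightarrow> u \<noteq> v \<Longrightarrow> prod_list (map (\<lambda>mu. h mu powi ind2 u v mu) [0..<n]) = h u * h v"
proof -
  show "prod_list (map (\<lambda>mu. h mu powi ind0 mu) [0..<n]) = 1"
    using prod_two[of "[0..<n]" n "Suc n" "\<lambda>mu. h mu powi ind0 mu"] by (simp add: ind0_def)
  show "u < n \<Longrightarrow> prod_list (map (\<lambda>mu. h mu powi ind1 u mu) [0..<n]) = h u"
    using prod_two[of "[0..<n]" u n "\<lambda>mu. h mu powi ind1 u mu"] by (simp add: ind1_def)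
  show "u < n \<Longrightarrow> v < n \<Longrightarrow> u \<noteq> v \<Longrightarrow> prod_list (map (\<lambda>mu. h mu powi ind2 u v mu) [0..<n]) = h u * h v"
    using prod_two[of "[0..<n]" u v "\<lambda>mu. h mu powi ind2 u v mu"] assms by (simp add: ind2_def)
qed

lemma kg_li:
  assumes "kashaev_generic m q \<iota> g" "finite M" "\<forall>(e, f)\<in>M. \<forall>mu\<ge>2*m. e mu = 0 \<and> f mu = 0"
    "(\<Sum>(e, f)\<in>M. \<iota> (c (e, f)) * kmonomial m g e f) = 0"
  shows "\<forall>x\<in>M. c x = 0"
proof -
  have "\<forall>M c. finite M \<longrightarrow> (\<forall>(e, f)\<in>M. \<forall>mu\<ge>2*m. e mu = 0 \<and> f mu = 0) \<longrightarrow>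
         (\<Sum>(e, f)\<in>M. \<iota> (c (e, f)) * kmonomial m g e f) = 0 \<longrightarrow> (\<forall>x\<in>M. c x = 0)"
    using assms(1) unfolding kashaev_generic_def by (elim conjE)
  then show ?thesis using assms(2-4) by blast
qed
lemma kg_rels:
  assumes "kashaev_generic m q \<iota> g"
  shows "\<And>mu. mu < 2*m \<Longrightarrow> fst (g mu) \<noteq> 0" "\<And>mu. mu < 2*m \<Longrightarrow> snd (g mu) \<noteq> 0"
   "\<And>mu nu. mu < 2*m \<Longrightarrow> nu < 2*m \<Longrightarrow> mu \<noteq> nu \<Longrightarrow> fst (g mu) * fst (g nu) = fst (g nu) * fst (g mu)"
   "\<And>mu nu. mu < 2*m \<Longrightarrow> nu < 2*m \<Longrightarrow> mu \<noteq> nu \<Longrightarrow> snd (g mu) * snd (g nu) = snd (g nu) * snd (g mu)"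
   "\<And>mu nu. mu < 2*m \<Longrightarrow> nu < 2*m \<Longrightarrow> mu \<noteq> nu \<Longrightarrow> fst (g mu) * snd (g nu) = snd (g nu) * fst (g mu)"
   "\<And>mu. mu < 2*m \<Longrightarrow> snd (g mu) * fst (g mu) = \<iota> (q\<^sup>2) * (fst (g mu) * snd (g mu))"
proof -
  have A: "\<forall>mu<2*m. fst (g mu) \<noteq> 0 \<and> snd (g mu) \<noteq> 0"
    using assms unfolding kashaev_generic_def by (rule conjunct1)
  have B: "\<forall>mu<2*m. \<forall>nu<2*m. mu \<noteq> nu \<longrightarrow>
         fst (g mu) * fst (g nu) = fst (g nu) * fst (g mu) \<and>
         snd (g mu) * snd (g nu) = snd (g nu) * snd (g mu) \<and>
         fst (g mu) * snd (g nu) = snd (g nu) * fst (g mu)"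
    using assms unfolding kashaev_generic_def by (rule conjunct1[OF conjunct2])
  have C: "\<forall>mu<2*m. snd (g mu) * fst (g mu) = \<iota> (q\<^sup>2) * fst (g mu) * snd (g mu)"
    using assms unfolding kashaev_generic_def by (rule conjunct1[OF conjunct2[OF conjunct2]])
  show "\<And>mu. mu < 2*m \<Longrightarrow> fst (g mu) \<noteq> 0" "\<And>mu. mu < 2*m \<Longrightarrow> snd (g mu) \<noteq> 0" using A by simp_all
  show "\<And>mu nu. mu < 2*m \<Longrightarrow> nu < 2*m \<Longrightarrow> mu \<noteq> nu \<Longrightarrow> fst (g mu) * fst (g nu) = fst (g nu) * fst (g mu)"
   "\<And>mu nu. mu < 2*m \<Longrightarrow> nu < 2*m \<Longrightarrow> mu \<noteq> nu \<Longrightarrow> snd (g mu) * snd (g nu) = snd (g nu) * snd (g mu)"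
   "\<And>mu nu. mu < 2*m \<Longrightarrow> nu < 2*m \<Longrightarrow> mu \<noteq> nu \<Longrightarrow> fst (g mu) * snd (g nu) = snd (g nu) * fst (g mu)"
    using B by simp_all
  show "\<And>mu. mu < 2*m \<Longrightarrow> snd (g mu) * fst (g mu) = \<iota> (q\<^sup>2) * (fst (g mu) * snd (g mu))"
    using C by (simp add: mult.assoc)
qed

lemma lin2:
  assumes kg: "kashaev_generic m q \<iota> g" and d: "(e1, f1) \<noteq> (e2, f2)"
    and s: "\<forall>(e, f)\<in>{(e1, f1), (e2, f2)}. \<forall>mu\<ge>2*m. e mu = 0 \<and> f mu = 0" and s1: "s1 \<noteq> 0"
  shows "\<iota> s1 * kmonomial m g e1 f1 + \<iota> s2 * kmonomial m g e2 f2 \<noteq> 0"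
proof
  assume h: "\<iota> s1 * kmonomial m g e1 f1 + \<iota> s2 * kmonomial m g e2 f2 = 0"
  define cf where "cf = (\<lambda>x. if x = (e1, f1) then s1 else s2)"
  define hh where "hh = (\<lambda>(e, f). \<iota> (cf (e, f)) * kmonomial m g e f)"
  have n21: "(e2, f2) \<noteq> (e1, f1)" using d by (rule not_sym)
  have c1: "cf (e1, f1) = s1" "cf (e2, f2) = s2" unfolding cf_def by (simp only: if_P if_not_P[OF n21] refl)+
  have nm: "(e1, f1) \<notin> {(e2, f2)}" using d by simp
  have "sum hh {(e1, f1), (e2, f2)} = hh (e1, f1) + sum hh {(e2, f2)}"
    by (rule sum.insert[OF _ nm]) simp
  also have "\<dots> = 0" unfolding hh_def using c1 h by simp
  finally have z: "(\<Sum>(e, f)\<in>{(e1, f1), (e2, f2)}. \<iota> (cf (e, f)) * kmonomial m g e f) = 0" unfolding hh_def .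
  have fin: "finite {(e1, f1), (e2, f2)}" by simp
  have "\<forall>x\<in>{(e1, f1), (e2, f2)}. cf x = 0" by (rule kg_li[OF kg fin s z])
  then show False using s1 c1 by simp
qed

lemma lin3:
  assumes kg: "kashaev_generic m q \<iota> g" and d: "(e1, f1) \<noteq> (e2, f2)" "(e1, f1) \<noteq> (e3, f3)" "(e2, f2) \<noteq> (e3, f3)"
    and s: "\<forall>(e, f)\<in>{(e1, f1), (e2, f2), (e3, f3)}. \<forall>mu\<ge>2*m. e mu = 0 \<and> f mu = 0" and s1: "s1 \<noteq> 0"
  shows "\<iota> s1 * kmonomial m g e1 f1 + \<iota> s2 * kmonomial m g e2 f2 + \<iota> s3 * kmonomial m g e3 f3 \<noteq> 0"
proof
  assume h: "\<iota> s1 * kmonomial m g e1 f1 + \<iota> s2 * kmonomial m g e2 f2 + \<iota> s3 * kmonomial m g e3 f3 = 0"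
  define cf where "cf = (\<lambda>x. if x = (e1, f1) then s1 else if x = (e2, f2) then s2 else s3)"
  define hh where "hh = (\<lambda>(e, f). \<iota> (cf (e, f)) * kmonomial m g e f)"
  have n21: "(e2, f2) \<noteq> (e1, f1)" using d(1) by (rule not_sym)
  have n31: "(e3, f3) \<noteq> (e1, f1)" using d(2) by (rule not_sym)
  have n32: "(e3, f3) \<noteq> (e2, f2)" using d(3) by (rule not_sym)
  have c1: "cf (e1, f1) = s1" "cf (e2, f2) = s2" "cf (e3, f3) = s3" unfolding cf_def
    by (simp only: if_P if_not_P[OF n21] if_not_P[OF n31] if_not_P[OF n32] refl)+
  have nm: "(e1, f1) \<notin> {(e2, f2), (e3, f3)}" using d by simp
  have nm2: "(e2, f2) \<notin> {(e3, f3)}" using d by simp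
  have "sum hh {(e1, f1), (e2, f2), (e3, f3)} = hh (e1, f1) + sum hh {(e2, f2), (e3, f3)}"
    by (rule sum.insert[OF _ nm]) simp
  also have "sum hh {(e2, f2), (e3, f3)} = hh (e2, f2) + sum hh {(e3, f3)}"
    by (rule sum.insert[OF _ nm2]) simp
  also have "hh (e1, f1) + (hh (e2, f2) + sum hh {(e3, f3)}) = 0" unfolding hh_def using c1 h by (simp add: add.assoc)
  finally have z: "(\<Sum>(e, f)\<in>{(e1, f1), (e2, f2), (e3, f3)}. \<iota> (cf (e, f)) * kmonomial m g e f) = 0" unfolding hh_def .
  have fin: "finite {(e1, f1), (e2, f2), (e3, f3)}" by simp
  have "\<forall>x\<in>{(e1, f1), (e2, f2), (e3, f3)}. cf x = 0" by (rule kg_li[OF kg fin s z])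
  then show False using s1 c1 by simp
qed

lemma km_forms:
  assumes kg: "kashaev_generic m q \<iota> g"
  shows "u < 2*m \<Longrightarrow> v < 2*m \<Longrightarrow> kmonomial m g (ind1 u) (ind1 v) = fst (g u) * snd (g v)"
    "u < 2*m \<Longrightarrow> kmonomial m g ind0 (ind1 u) = snd (g u)"
    "u < 2*m \<Longrightarrow> v < 2*m \<Longrightarrow> w < 2*m \<Longrightarrow> u \<noteq> v \<Longrightarrow> kmonomial m g (ind2 u v) (ind1 w) = fst (g u) * fst (g v) * snd (g w)"
    "u < 2*m \<Longrightarrow> v < 2*m \<Longrightarrow> u \<noteq> v \<Longrightarrow> kmonomial m g (ind2 u v) ind0 = fst (g u) * fst (g v)"
    "u < 2*m \<Longrightarrow> v < 2*m \<Longrightarrow> u \<noteq> v \<Longrightarrow> kmonomial m g ind0 (ind2 u v) = snd (g u) * snd (g v)"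
proof -
  have cY: "\<forall>mu<2*m. \<forall>nu<2*m. mu \<noteq> nu \<longrightarrow> fst (g mu) * fst (g nu) = fst (g nu) * fst (g mu)"
    using kg_rels(3)[OF kg] by blast
  have cZ: "\<forall>mu<2*m. \<forall>nu<2*m. mu \<noteq> nu \<longrightarrow> snd (g mu) * snd (g nu) = snd (g nu) * snd (g mu)"
    using kg_rels(4)[OF kg] by blast
  note pY = prodl_ind[of "2*m" "\<lambda>mu. fst (g mu)", OF cY]
  note pZ = prodl_ind[of "2*m" "\<lambda>mu. snd (g mu)", OF cZ]
  show "u < 2*m \<Longrightarrow> v < 2*m \<Longrightarrow> kmonomial m g (ind1 u) (ind1 v) = fst (g u) * snd (g v)"
    unfolding kmonomial_def using pY pZ by simp
  show "u < 2*m \<Longrightarrow> kmonomial m g ind0 (ind1 u) = snd (g u)"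
    unfolding kmonomial_def using pY pZ by simp
  show "u < 2*m \<Longrightarrow> v < 2*m \<Longrightarrow> w < 2*m \<Longrightarrow> u \<noteq> v \<Longrightarrow> kmonomial m g (ind2 u v) (ind1 w) = fst (g u) * fst (g v) * snd (g w)"
    unfolding kmonomial_def using pY pZ by simp
  show "u < 2*m \<Longrightarrow> v < 2*m \<Longrightarrow> u \<noteq> v \<Longrightarrow> kmonomial m g (ind2 u v) ind0 = fst (g u) * fst (g v)"
    unfolding kmonomial_def using pY pZ by simp
  show "u < 2*m \<Longrightarrow> v < 2*m \<Longrightarrow> u \<noteq> v \<Longrightarrow> kmonomial m g ind0 (ind2 u v) = snd (g u) * snd (g v)"
    unfolding kmonomial_def using pY pZ by simp
qed

lemma ind_facts:
  "ind1 u u = 1" "u \<noteq> v \<Longrightarrow> ind1 u v = 0" "ind0 v = 0" "ind2 u v u = 1" "ind2 u v v = 1"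
  "w \<noteq> u \<Longrightarrow> w \<noteq> v \<Longrightarrow> ind2 u v w = 0"
  by (auto simp: ind0_def ind1_def ind2_def)

lemma nzA:
  assumes kg: "kashaev_generic m q \<iota> g" and cen: "central_C_algebra \<iota>"
    and u: "u < 2*m" and v: "v < 2*m" and uv: "u \<noteq> v" and s: "s \<noteq> 0"
  shows "\<iota> s * (fst (g u) * snd (g v)) + snd (g u) \<noteq> 0"
proof -
  have d: "(ind1 u, ind1 v) \<noteq> (ind0, ind1 u)"
  proof
    assume "(ind1 u, ind1 v) = (ind0, ind1 u)" then have "ind1 u u = ind0 u" by simp
    then show False by (simp add: ind_facts)
  qed
  have sp: "\<forall>(e, f)\<in>{(ind1 u, ind1 v), (ind0, ind1 u)}. \<forall>mu\<ge>2*m. e mu = 0 \<and> f mu = 0"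
    using u v by (auto simp: ind0_def ind1_def)
  have "\<iota> s * kmonomial m g (ind1 u) (ind1 v) + \<iota> 1 * kmonomial m g ind0 (ind1 u) \<noteq> 0"
    by (rule lin2[OF kg d sp s])
  then show ?thesis using km_forms[OF kg] u v cca_props(1)[OF cen] by simp
qed

lemma nzB:
  assumes kg: "kashaev_generic m q \<iota> g" and cen: "central_C_algebra \<iota>"
    and u: "u < 2*m" and v: "v < 2*m" and w: "w < 2*m" and uv: "u \<noteq> v" "u \<noteq> w" "v \<noteq> w" and s: "s1 \<noteq> 0"
  shows "\<iota> s1 * (fst (g u) * fst (g v) * snd (g w)) + \<iota> s2 * (fst (g u) * snd (g v)) + snd (g u) \<noteq> 0"
proof -
  have d1: "(ind2 u v, ind1 w) \<noteq> (ind1 u, ind1 v)"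
  proof
    assume "(ind2 u v, ind1 w) = (ind1 u, ind1 v)" then have "ind2 u v v = ind1 u v" by simp
    then show False using uv by (simp add: ind_facts)
  qed
  have d2: "(ind2 u v, ind1 w) \<noteq> (ind0, ind1 u)"
  proof
    assume "(ind2 u v, ind1 w) = (ind0, ind1 u)" then have "ind2 u v v = ind0 v" by simp
    then show False using uv by (simp add: ind_facts)
  qed
  have d3: "(ind1 u, ind1 v) \<noteq> (ind0, ind1 u)"
  proof
    assume "(ind1 u, ind1 v) = (ind0, ind1 u)" then have "ind1 u u = ind0 u" by simp
    then show False by (simp add: ind_facts)
  qed
  have sp: "\<forall>(e, f)\<in>{(ind2 u v, ind1 w), (ind1 u, ind1 v), (ind0, ind1 u)}. \<forall>mu\<ge>2*m. e mu = 0 \<and> f mu = 0"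
    using u v w by (auto simp: ind0_def ind1_def ind2_def)
  have "\<iota> s1 * kmonomial m g (ind2 u v) (ind1 w) + \<iota> s2 * kmonomial m g (ind1 u) (ind1 v) + \<iota> 1 * kmonomial m g ind0 (ind1 u) \<noteq> 0"
    by (rule lin3[OF kg d1 d2 d3 sp s])
  then show ?thesis using km_forms[OF kg] u v w uv cca_props(1)[OF cen] by simp
qed

lemma nzC:
  assumes kg: "kashaev_generic m q \<iota> g" and cen: "central_C_algebra \<iota>"
    and u: "u < 2*m" and v: "v < 2*m" and uv: "u \<noteq> v" and s: "s \<noteq> 0"
  shows "\<iota> s * (fst (g u) * fst (g v)) + snd (g u) * snd (g v) \<noteq> 0"
proof -
  have d: "(ind2 u v, ind0) \<noteq> (ind0, ind2 u v)"
  proof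
    assume "(ind2 u v, ind0) = (ind0, ind2 u v)" then have "ind2 u v u = ind0 u" by simp
    then show False by (simp add: ind_facts)
  qed
  have sp: "\<forall>(e, f)\<in>{(ind2 u v, ind0), (ind0, ind2 u v)}. \<forall>mu\<ge>2*m. e mu = 0 \<and> f mu = 0"
    using u v by (auto simp: ind0_def ind2_def)
  have "\<iota> s * kmonomial m g (ind2 u v) ind0 + \<iota> 1 * kmonomial m g ind0 (ind2 u v) \<noteq> 0"
    by (rule lin2[OF kg d sp s])
  then show ?thesis using km_forms[OF kg] u v uv cca_props(1)[OF cen] by simp
qed

lemma omega_alg2:
  fixes G :: "'a::division_ring gens"
  assumes cen: "central_C_algebra \<iota>" and uv: "u \<noteq> v" and w0: "w \<noteq> 0"
    and Yv: "fst (G v) \<noteq> 0" and D0: "D \<noteq> 0"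
    and c3: "snd (G v) * fst (G v) = \<iota> w * (fst (G v) * snd (G v))"
    and Ddef: "D = \<iota> (a * b * w) * (fst (G u) * snd (G v)) + snd (G u)"
  shows "path_alg a b \<iota> (omega u v) G = G(u := (\<iota> (a * b) * (fst (G v) * fst (G u)),
                fst (G v) * D * inverse (fst (G v))),
             v := (fst (G v) * inverse D * snd (G u),
                \<iota> (a * b) * (fst (G v) * inverse D * inverse (fst (G v)) * snd (G v))))"
proof -
  obtain Yu Zu Yv Zv where gu: "G u = (Yu, Zu)" and gv: "G v = (Yv, Zv)" by (cases "G u", cases "G v") auto
  have Yv0: "Yv \<noteq> 0" using Yv gv by simp
  note sc = sc_rules[OF cen]
  have c3': "Zv * Yv = \<iota> w * (Yv * Zv)" using c3 gu gv by simp
  have qi: "inverse Yv * Zv = \<iota> w * (Zv * inverse Yv)" by (rule qc_inv[OF cen c3' Yv0])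
  define P where "P = \<iota> b * Yu * (\<iota> a * inverse Yv * Zv) + Zu * inverse Yv"
  have PD: "P = D * inverse Yv"
    unfolding P_def Ddef gu gv fst_conv snd_conv
    by (simp add: distrib_right mult.assoc sc qi ac_simps)
  have P0: "P \<noteq> 0" using PD D0 Yv0 by simp
  have invP: "inverse P = Yv * inverse D" using PD D0 Yv0 by (simp add: nonzero_inverse_mult_distrib)
  have invPY: "inverse (inverse P * inverse Yv) = Yv * P" using P0 Yv0 by (simp add: nonzero_inverse_mult_distrib)
  have zi: "Zv * inverse Yv = \<iota> (inverse w) * (inverse Yv * Zv)"
  proof -
    have "\<iota> (inverse w) * (inverse Yv * Zv) = \<iota> (inverse w) * (\<iota> w * (Zv * inverse Yv))" using qi by simp
    also have "\<dots> = \<iota> (inverse w * w) * (Zv * inverse Yv)" by (simp add: sc mult.assoc[symmetric])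
    also have "\<dots> = Zv * inverse Yv" using w0 cca_props(1)[OF cen] by simp
    finally show ?thesis by simp
  qed
  have zi': "Zv * (inverse Yv * x) = \<iota> (inverse w) * (inverse Yv * (Zv * x))" for x
    using zi by (simp add: mult.assoc[symmetric])
  have G1: "move_alg a b \<iota> (Rot v) G = G(v := (\<iota> a * inverse Yv * Zv, inverse Yv))" using gv by simp
  have G2: "move_alg a b \<iota> (Flip u v) (G(v := (\<iota> a * inverse Yv * Zv, inverse Yv))) =
     (G(v := (\<iota> a * inverse Yv * Zv, inverse Yv)))(u := (inverse P * inverse Yv, \<iota> b * inverse P * Yu),
        v := (inverse P * Zu, \<iota> b * inverse P * (\<iota> a * inverse Yv * Zv)))"
    using gu uv by (simp add: P_def Let_def)
  have e1: "\<iota> a * inverse (inverse P * inverse Yv) * (\<iota> b * inverse P * Yu) = \<iota> (a * b) * (Yv * Yu)"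
    unfolding invPY using P0 by (simp add: mult.assoc sc inv_cancel)
  have e2: "inverse (inverse P * inverse Yv) = Yv * D * inverse Yv"
    using invPY PD by (simp add: mult.assoc)
  have e1': "\<iota> a * (Yv * D * inverse Yv) * (\<iota> b * inverse P * Yu) = \<iota> (a * b) * (Yv * Yu)"
    using e1 e2 by simp
  have e3: "inverse P * Zu = Yv * inverse D * Zu" unfolding invP ..
  have e4: "\<iota> b * inverse P * (\<iota> a * inverse Yv * Zv) = \<iota> (a * b) * (Yv * inverse D * inverse Yv * Zv)"
    unfolding invP by (simp add: mult.assoc sc ac_simps)
  have "path_alg a b \<iota> (omega u v) G = move_alg a b \<iota> (Rot u) (move_alg a b \<iota> (Flip u v) (move_alg a b \<iota> (Rot v) G))"
    by (simp add: omega_def)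
  also have "\<dots> = G(u := (\<iota> (a * b) * (Yv * Yu), Yv * D * inverse Yv),
             v := (Yv * inverse D * Zu, \<iota> (a * b) * (Yv * inverse D * inverse Yv * Zv)))"
    unfolding G1 G2 using uv by (simp add: e1' e2 e3 e4 fun_upd_twist)
  finally show ?thesis using gu gv by simp
qed

lemma path_alg_append: "path_alg a b \<iota> (xs @ ys) G = path_alg a b \<iota> ys (path_alg a b \<iota> xs G)"
  by (induction xs arbitrary: G) auto

lemma pent_alg:
  fixes g :: "'a::division_ring gens"
  assumes cen: "central_C_algebra \<iota>" and kg: "kashaev_generic m q \<iota> g"
    and q0: "q \<noteq> 0" and a0: "a \<noteq> 0" and b0: "b \<noteq> 0"
    and ijk: "i < 2*m" "j < 2*m" "k < 2*m" "i \<noteq> j" "i \<noteq> k" "j \<noteq> k"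
  shows "path_alg a b \<iota> (omega i j @ omega i k @ omega j k) g = path_alg a b \<iota> (omega j k @ omega i j) g"
proof -
  define Yi where "Yi = fst (g i)"
  define Zi where "Zi = snd (g i)"
  define Yj where "Yj = fst (g j)"
  define Zj where "Zj = snd (g j)"
  define Yk where "Yk = fst (g k)"
  define Zk where "Zk = snd (g k)"
  have gi: "g i = (Yi, Zi)" "g j = (Yj, Zj)" "g k = (Yk, Zk)" by (simp_all add: Yi_def Zi_def Yj_def Zj_def Yk_def Zk_def)
  note R = kg_rels[OF kg]
  have w0: "q^2 \<noteq> 0" using q0 by simp
  have ab0: "a * b \<noteq> 0" using a0 b0 by simp
  have ipr: "\<iota> (a * b * q^2) = \<iota> (a * b) * \<iota> (q^2)" by (rule cca_props(3)[OF cen])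
  interpret P: pent Yi Zi Yj Zj Yk Zk "\<iota> (a * b)" "\<iota> (q^2)"
  proof
    show "Yi \<noteq> 0" "Zi \<noteq> 0" "Yj \<noteq> 0" "Zj \<noteq> 0" "Yk \<noteq> 0" "Zk \<noteq> 0"
      unfolding Yi_def Zi_def Yj_def Zj_def Yk_def Zk_def using R(1,2) ijk by auto
    show "\<iota> (a * b) \<noteq> 0" "\<iota> (q^2) \<noteq> 0" using cca_nz[OF cen] ab0 w0 by auto
    show "\<And>x. \<iota> (a * b) * x = x * \<iota> (a * b)" "\<And>x. \<iota> (q^2) * x = x * \<iota> (q^2)" using cca_props(4)[OF cen] by auto
    show "Yi * Yj = Yj * Yi" "Yi * Yk = Yk * Yi" "Yj * Yk = Yk * Yj"
      unfolding Yi_def Yj_def Yk_def using R(3) ijk by auto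
    show "Zi * Zj = Zj * Zi" "Zi * Zk = Zk * Zi" "Zj * Zk = Zk * Zj"
      unfolding Zi_def Zj_def Zk_def using R(4) ijk by auto
    show "Zi * Yj = Yj * Zi" "Zi * Yk = Yk * Zi" "Zj * Yi = Yi * Zj" "Zj * Yk = Yk * Zj" "Zk * Yi = Yi * Zk" "Zk * Yj = Yj * Zk"
      unfolding Yi_def Zi_def Yj_def Zj_def Yk_def Zk_def using R(5) ijk by (auto simp: eq_commute)
    show "Zi * Yi = \<iota> (q^2) * (Yi * Zi)" "Zj * Yj = \<iota> (q^2) * (Yj * Zj)" "Zk * Yk = \<iota> (q^2) * (Yk * Zk)"
      unfolding Yi_def Zi_def Yj_def Zj_def Yk_def Zk_def using R(6) ijk by auto
  qed
  interpret P2: pent2 Yi Zi Yj Zj Yk Zk "\<iota> (a * b)" "\<iota> (q^2)"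
  proof
    show "P.E1 \<noteq> 0" unfolding P.NF_E1 ipr[symmetric] unfolding Yi_def Zi_def Zj_def
      using nzA[OF kg cen ijk(1) ijk(2) ijk(4)] a0 b0 q0 by simp
    show "P.D1 \<noteq> 0" unfolding P.NF_D1 ipr[symmetric] unfolding Yj_def Zj_def Zk_def
      using nzA[OF kg cen ijk(2) ijk(3) ijk(6)] a0 b0 q0 by simp
    have i2: "\<iota> (a * b) * \<iota> (a * b) * \<iota> (q^2) = \<iota> (a * b * (a * b) * q^2)" using cca_props(3)[OF cen] by metis
    show "P.D2 \<noteq> 0" unfolding P.NF_D2 ipr[symmetric] i2 unfolding Yi_def Yj_def Zi_def Zj_def Zk_def
      using nzB[OF kg cen ijk] a0 b0 q0 by simp
    show "P.E2 \<noteq> 0" unfolding P.NF_E2 i2 unfolding Yi_def Yj_def Zi_def Zj_def Zk_def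
      using nzB[OF kg cen ijk] a0 b0 q0 by simp
  qed
  have gf: "fst (g i) = Yi" "snd (g i) = Zi" "fst (g j) = Yj" "snd (g j) = Zj" "fst (g k) = Yk" "snd (g k) = Zk"
    using gi by simp_all
  note nz = P.nz
  have H1: "path_alg a b \<iota> (omega i j) g = g(i := (\<iota> (a * b) * (Yj * Yi), P.E1p),
      j := (Yj * inverse P.E1 * Zi, \<iota> (a * b) * (Yj * inverse P.E1 * inverse Yj * Zj)))"
  proof -
    have "path_alg a b \<iota> (omega i j) g = g(i := (\<iota> (a * b) * (fst (g j) * fst (g i)), \<iota> (a * b) * (fst (g i) * snd (g j)) + snd (g i)),
      j := (fst (g j) * inverse P.E1 * snd (g i), \<iota> (a * b) * (fst (g j) * inverse P.E1 * inverse (fst (g j)) * snd (g j))))"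
      by (rule omega_alg[OF cen ijk(4) w0]) (simp_all add: gf nz P2.nE1 P2.nE1[unfolded P.E1_def] P.yy P.zy P.qq P.E1_def ipr)
    then show ?thesis by (simp add: gf P.E1p_def)
  qed
  have H1f: "fst (path_alg a b \<iota> (omega i j) g i) = \<iota> (a * b) * (Yj * Yi)" "snd (path_alg a b \<iota> (omega i j) g i) = P.E1p"
    "fst (path_alg a b \<iota> (omega i j) g k) = Yk" "snd (path_alg a b \<iota> (omega i j) g k) = Zk"
    "fst (path_alg a b \<iota> (omega i j) g j) = Yj * inverse P.E1 * Zi"
    "snd (path_alg a b \<iota> (omega i j) g j) = \<iota> (a * b) * (Yj * inverse P.E1 * inverse Yj * Zj)"
    unfolding H1 using ijk gf by auto
  define G1 where "G1 = path_alg a b \<iota> (omega i j) g"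
  have H2: "path_alg a b \<iota> (omega i j @ omega i k) g = G1(
      i := (\<iota> (a * b) * (Yk * (\<iota> (a * b) * (Yj * Yi))), \<iota> (a * b) * (\<iota> (a * b) * (Yj * Yi) * Zk) + P.E1p),
      k := (Yk * inverse P.E2 * P.E1p, \<iota> (a * b) * (Yk * inverse P.E2 * inverse Yk * Zk)))"
  proof -
    have "path_alg a b \<iota> (omega i k) G1 = G1(i := (\<iota> (a * b) * (fst (G1 k) * fst (G1 i)), \<iota> (a * b) * (fst (G1 i) * snd (G1 k)) + snd (G1 i)),
      k := (fst (G1 k) * inverse P.E2 * snd (G1 i), \<iota> (a * b) * (fst (G1 k) * inverse P.E2 * inverse (fst (G1 k)) * snd (G1 k))))"
      by (rule omega_alg[OF cen ijk(5) w0])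
        (simp_all add: G1_def H1f nz P2.nE2 P2.nE2[unfolded P.E2_def] P.pc3 P.pc4 P.qq P.E2_def ipr)
    then show ?thesis unfolding path_alg_append G1_def[symmetric] by (simp add: G1_def H1f)
  qed
  define G2 where "G2 = path_alg a b \<iota> (omega i j @ omega i k) g"
  define E3 where "E3 = \<iota> (a * b) * (Yj * (inverse P.E1 * (inverse P.D2 * (inverse Yj * (P.D1 * P.E1p)))))"
  have G2f: "fst (G2 k) = Yk * inverse P.E2 * P.E1p" "snd (G2 k) = \<iota> (a * b) * (Yk * inverse P.E2 * inverse Yk * Zk)"
    "fst (G2 j) = Yj * inverse P.E1 * Zi" "snd (G2 j) = \<iota> (a * b) * (Yj * inverse P.E1 * inverse Yj * Zj)"
    "G2 i = (\<iota> (a * b) * (Yk * (\<iota> (a * b) * (Yj * Yi))), \<iota> (a * b) * (\<iota> (a * b) * (Yj * Yi) * Zk) + P.E1p)"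
    unfolding G2_def H2 using ijk by (auto simp: G1_def H1f)
  have Yk2: "Yk * inverse P.E2 * P.E1p \<noteq> 0" using nz P2.nE2 P2.nE1p by simp
  have nE3l: "\<iota> (a * b) * \<iota> (q^2) * (Yj * inverse P.E1 * Zi * (\<iota> (a * b) * (Yk * inverse P.E2 * inverse Yk * Zk))) +
    \<iota> (a * b) * (Yj * inverse P.E1 * inverse Yj * Zj) \<noteq> 0" unfolding P2.E3f by (rule P2.nE3)
  have H3: "path_alg a b \<iota> (omega i j @ omega i k @ omega j k) g = G2(
       j := (\<iota> (a * b) * (fst (G2 k) * fst (G2 j)), fst (G2 k) * E3 * inverse (fst (G2 k))),
       k := (fst (G2 k) * inverse E3 * snd (G2 j), \<iota> (a * b) * (fst (G2 k) * inverse E3 * inverse (fst (G2 k)) * snd (G2 k))))"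
  proof -
    have "path_alg a b \<iota> (omega j k) G2 = G2(
       j := (\<iota> (a * b) * (fst (G2 k) * fst (G2 j)), fst (G2 k) * E3 * inverse (fst (G2 k))),
       k := (fst (G2 k) * inverse E3 * snd (G2 j), \<iota> (a * b) * (fst (G2 k) * inverse E3 * inverse (fst (G2 k)) * snd (G2 k))))"
      by (rule omega_alg2[OF cen ijk(6) w0])
        (simp_all only: G2f Yk2 E3_def nE3l P2.C3 flip: P2.E3f, simp_all add: ipr)
    then show ?thesis unfolding G2_def append_assoc[symmetric] path_alg_append[of _ _ _ "omega i j @ omega i k"] .
  qed
  have K1: "path_alg a b \<iota> (omega j k) g = g(j := (\<iota> (a * b) * (Yk * Yj), P.D1p),
      k := (Yk * inverse P.D1 * Zj, \<iota> (a * b) * (Yk * inverse P.D1 * inverse Yk * Zk)))"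
  proof -
    have "path_alg a b \<iota> (omega j k) g = g(j := (\<iota> (a * b) * (fst (g k) * fst (g j)), \<iota> (a * b) * (fst (g j) * snd (g k)) + snd (g j)),
      k := (fst (g k) * inverse P.D1 * snd (g j), \<iota> (a * b) * (fst (g k) * inverse P.D1 * inverse (fst (g k)) * snd (g k))))"
      by (rule omega_alg[OF cen ijk(6) w0]) (simp_all add: gf nz P2.nD1 P2.nD1[unfolded P.D1_def] P.yy P.zy P.qq P.D1_def ipr)
    then show ?thesis by (simp add: gf P.D1p_def)
  qed
  define K1g where "K1g = path_alg a b \<iota> (omega j k) g"
  have K1f: "fst (K1g j) = \<iota> (a * b) * (Yk * Yj)" "snd (K1g j) = P.D1p" "fst (K1g i) = Yi" "snd (K1g i) = Zi"
    "K1g k = (Yk * inverse P.D1 * Zj, \<iota> (a * b) * (Yk * inverse P.D1 * inverse Yk * Zk))"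
    unfolding K1g_def K1 using ijk gf by auto
  have K2: "path_alg a b \<iota> (omega j k @ omega i j) g = K1g(
      i := (\<iota> (a * b) * (\<iota> (a * b) * (Yk * Yj) * Yi), \<iota> (a * b) * (Yi * P.D1p) + Zi),
      j := (\<iota> (a * b) * (Yk * Yj) * inverse P.D2 * Zi, \<iota> (a * b) * (\<iota> (a * b) * (Yk * Yj) * inverse P.D2 * inverse (\<iota> (a * b) * (Yk * Yj)) * P.D1p)))"
  proof -
    have "path_alg a b \<iota> (omega i j) K1g = K1g(i := (\<iota> (a * b) * (fst (K1g j) * fst (K1g i)), \<iota> (a * b) * (fst (K1g i) * snd (K1g j)) + snd (K1g i)),
      j := (fst (K1g j) * inverse P.D2 * snd (K1g i), \<iota> (a * b) * (fst (K1g j) * inverse P.D2 * inverse (fst (K1g j)) * snd (K1g j))))"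
      by (rule omega_alg[OF cen ijk(4) w0])
        (simp_all add: K1f nz P2.nD2 P2.nD2[unfolded P.D2_def] P.pc1 P.pc2 P.Q2 P.D2_def ipr)
    then show ?thesis unfolding path_alg_append K1g_def[symmetric] by (simp add: K1f)
  qed
  show ?thesis
  proof
    fix mu
    show "path_alg a b \<iota> (omega i j @ omega i k @ omega j k) g mu = path_alg a b \<iota> (omega j k @ omega i j) g mu"
    proof (cases "mu = i")
      case True
      then show ?thesis unfolding H3 K2 using ijk G2f(5)
        by (simp add: P2.G_Yi P2.G_Zi[unfolded P.E1p_def[symmetric]] P.D1p_def)
    next
      case ni: False
      show ?thesis
      proof (cases "mu = j")
        case True
        then show ?thesis unfolding H3 K2 G2f using ijk by (simp add: P2.G_Yj P2.G_Zj2 E3_def)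
      next
        case nj: False
        show ?thesis
        proof (cases "mu = k")
          case True
          then show ?thesis unfolding H3 K2 G2f using ijk K1f(5) by (simp add: P2.G_Yk P2.G_Zk E3_def)
        next
          case False
          then show ?thesis unfolding H3 K2 G2_def K1g_def H2 G1_def H1 K1 using ni nj by simp
        qed
      qed
    qed
  qed
qed

lemma flip2_alg:
  fixes g :: "'a::division_ring gens"
  assumes cen: "central_C_algebra \<iota>" and kg: "kashaev_generic m q \<iota> g"
    and q0: "q \<noteq> 0" and b0: "b \<noteq> 0"
    and ij: "i < 2*m" "j < 2*m" "i \<noteq> j"
  shows "path_alg a b \<iota> [Flip i j, Flip i j] g = path_alg a b \<iota> [Reindex (transpose i j)] g"
proof -
  define Yi where "Yi = fst (g i)"
  define Zi where "Zi = snd (g i)"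
  define Yj where "Yj = fst (g j)"
  define Zj where "Zj = snd (g j)"
  have gi: "g i = (Yi, Zi)" "g j = (Yj, Zj)" by (simp_all add: Yi_def Zi_def Yj_def Zj_def)
  note R = kg_rels[OF kg]
  have w0: "q^2 \<noteq> 0" using q0 by simp
  interpret D: duo Yi Zi Yj Zj "\<iota> b" "\<iota> (q^2)"
  proof
    show "Yi \<noteq> 0" "Zi \<noteq> 0" "Yj \<noteq> 0" "Zj \<noteq> 0"
      unfolding Yi_def Zi_def Yj_def Zj_def using R(1,2) ij by auto
    show "\<iota> b \<noteq> 0" "\<iota> (q^2) \<noteq> 0" using cca_nz[OF cen] b0 w0 by auto
    show "\<And>x. \<iota> b * x = x * \<iota> b" "\<And>x. \<iota> (q^2) * x = x * \<iota> (q^2)" using cca_props(4)[OF cen] by auto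
    show "Yi * Yj = Yj * Yi" unfolding Yi_def Yj_def using R(3) ij by auto
    show "Zi * Zj = Zj * Zi" unfolding Zi_def Zj_def using R(4) ij by auto
    show "Zi * Yj = Yj * Zi" "Zj * Yi = Yi * Zj"
      unfolding Yi_def Zi_def Yj_def Zj_def using R(5) ij by (auto simp: eq_commute)
    show "Zi * Yi = \<iota> (q^2) * (Yi * Zi)" "Zj * Yj = \<iota> (q^2) * (Yj * Zj)"
      unfolding Yi_def Zi_def Yj_def Zj_def using R(6) ij by auto
  qed
  have P0: "D.P \<noteq> 0"
  proof -
    have "\<iota> b * (fst (g i) * fst (g j)) + snd (g i) * snd (g j) \<noteq> 0" by (rule nzC[OF kg cen ij b0])
    then show ?thesis unfolding D.P_def by (simp add: gi mult.assoc)
  qed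
  have G1: "move_alg a b \<iota> (Flip i j) g = g(i := (inverse D.P * Zj, \<iota> b * inverse D.P * Yi),
      j := (inverse D.P * Zi, \<iota> b * inverse D.P * Yj))"
    using gi by (simp add: D.P_def Let_def)
  have Pp: "\<iota> b * (inverse D.P * Zj) * (inverse D.P * Zi) + \<iota> b * inverse D.P * Yi * (\<iota> b * inverse D.P * Yj) = \<iota> b * inverse D.P"
    by (rule D.Pp[OF P0])
  have B0: "\<iota> b \<noteq> 0" using cca_nz[OF cen] b0 by auto
  have iv: "inverse (\<iota> b * inverse D.P) = D.P * inverse (\<iota> b)" using B0 P0 by (simp add: nonzero_inverse_mult_distrib)
  have cb: "\<iota> b * x = x * \<iota> b" for x using cca_props(4)[OF cen] by auto
  have e1: "D.P * inverse (\<iota> b) * (\<iota> b * inverse D.P * Yj) = Yj"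
    using B0 P0 by (simp add: mult.assoc inv_cancel)
  have e2: "\<iota> b * (D.P * inverse (\<iota> b)) * (inverse D.P * Zj) = Zj"
  proof -
    have "\<iota> b * (D.P * inverse (\<iota> b)) = D.P" using cb[of "D.P * inverse (\<iota> b)"] B0 by (simp add: mult.assoc)
    then show ?thesis using P0 by (simp add: mult.assoc inv_cancel)
  qed
  have e3: "D.P * inverse (\<iota> b) * (\<iota> b * inverse D.P * Yi) = Yi"
    using B0 P0 by (simp add: mult.assoc inv_cancel)
  have e4: "\<iota> b * (D.P * inverse (\<iota> b)) * (inverse D.P * Zi) = Zi"
  proof -
    have "\<iota> b * (D.P * inverse (\<iota> b)) = D.P" using cb[of "D.P * inverse (\<iota> b)"] B0 by (simp add: mult.assoc)
    then show ?thesis using P0 by (simp add: mult.assoc inv_cancel)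
  qed
  have pa: "path_alg a b \<iota> [Flip i j, Flip i j] g = move_alg a b \<iota> (Flip i j) (move_alg a b \<iota> (Flip i j) g)" by simp
  show ?thesis unfolding pa G1
  proof
    fix mu
    show "move_alg a b \<iota> (Flip i j) (g(i := (inverse D.P * Zj, \<iota> b * inverse D.P * Yi),
      j := (inverse D.P * Zi, \<iota> b * inverse D.P * Yj))) mu = path_alg a b \<iota> [Reindex (transpose i j)] g mu"
      using ij by (simp add: G1 Let_def Pp iv e1 e2 e3 e4 gi transpose_def)
  qed
qed

lemma rot3_alg:
  fixes G :: "'a::division_ring gens"
  assumes cen: "central_C_algebra \<iota>" and a0: "a \<noteq> 0" and Y: "fst (G i) \<noteq> 0" and Z: "snd (G i) \<noteq> 0"
  shows "path_alg a b \<iota> [Rot i, Rot i, Rot i] G = G"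
proof -
  obtain Y0 Z0 where gi: "G i = (Y0, Z0)" by (cases "G i")
  have Y0: "Y0 \<noteq> 0" and Z0: "Z0 \<noteq> 0" using Y Z gi by auto
  have A0: "\<iota> a \<noteq> 0" using cca_nz[OF cen a0] .
  have cA: "\<And>x. \<iota> a * x = x * \<iota> a" using cca_props(4)[OF cen] by auto
  have i1: "inverse (\<iota> a * inverse Y0 * Z0) = inverse Z0 * Y0 * inverse (\<iota> a)"
    using A0 Y0 Z0 by (simp add: nonzero_inverse_mult_distrib mult.assoc)
  have y2: "\<iota> a * (inverse Z0 * Y0 * inverse (\<iota> a)) * inverse Y0 = inverse Z0"
  proof -
    have "\<iota> a * (inverse Z0 * Y0 * inverse (\<iota> a)) = inverse Z0 * Y0 * inverse (\<iota> a) * \<iota> a" by (rule cA)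
    also have "\<dots> = inverse Z0 * Y0" using A0 by (simp add: mult.assoc)
    finally show ?thesis using Y0 by (simp add: mult.assoc)
  qed
  have y3: "\<iota> a * Z0 * (inverse Z0 * Y0 * inverse (\<iota> a)) = Y0"
  proof -
    have "\<iota> a * Z0 * (inverse Z0 * Y0 * inverse (\<iota> a)) = \<iota> a * (Y0 * inverse (\<iota> a))"
      using Z0 by (simp add: mult.assoc inv_cancel)
    also have "\<dots> = Y0 * inverse (\<iota> a) * \<iota> a" by (rule cA)
    also have "\<dots> = Y0" using A0 by (simp add: mult.assoc)
    finally show ?thesis .
  qed
  show ?thesis using gi by (simp add: i1 y2 y3 fun_upd_idem)
qed

lemma rot_comm_alg:
  "path_alg a b \<iota> [Rot i, Rot j] G = path_alg a b \<iota> [Rot j, Rot i] G"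
  by (cases "i = j") (auto simp: fun_upd_twist)

lemma rot_reindex_alg:
  assumes "bij \<alpha>"
  shows "path_alg a b \<iota> [Rot i, Reindex \<alpha>] G = path_alg a b \<iota> [Reindex \<alpha>, Rot (inv \<alpha> i)] G"
proof
  fix mu
  have e: "\<alpha> (inv \<alpha> i) = i" using assms bij_is_surj surj_f_inv_f by metis
  have e2: "\<alpha> mu = i \<longleftrightarrow> mu = inv \<alpha> i" using bij_inv_eq_iff[OF assms] by metis
  show "path_alg a b \<iota> [Rot i, Reindex \<alpha>] G mu = path_alg a b \<iota> [Reindex \<alpha>, Rot (inv \<alpha> i)] G mu"
    by (cases "mu = inv \<alpha> i") (simp_all add: e e2)
qed

lemma flip_reindex_alg:
  assumes "bij \<alpha>" and ij: "i \<noteq> j"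
  shows "path_alg a b \<iota> [Flip i j, Reindex \<alpha>] G = path_alg a b \<iota> [Reindex \<alpha>, Flip (inv \<alpha> i) (inv \<alpha> j)] G"
proof
  fix mu
  have e: "\<alpha> (inv \<alpha> i) = i" "\<alpha> (inv \<alpha> j) = j" using assms(1) bij_is_surj surj_f_inv_f by metis+
  have e2: "\<alpha> mu = i \<longleftrightarrow> mu = inv \<alpha> i" "\<alpha> mu = j \<longleftrightarrow> mu = inv \<alpha> j" using bij_inv_eq_iff[OF assms(1)] by metis+
  show "path_alg a b \<iota> [Flip i j, Reindex \<alpha>] G mu = path_alg a b \<iota> [Reindex \<alpha>, Flip (inv \<alpha> i) (inv \<alpha> j)] G mu"
    by (cases "mu = inv \<alpha> j"; cases "mu = inv \<alpha> i") (use ij e in \<open>simp_all add: e e2 Let_def\<close>)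
qed

lemma flip_flip_alg:
  assumes "i \<noteq> k" "i \<noteq> l" "j \<noteq> k" "j \<noteq> l"
  shows "path_alg a b \<iota> [Flip k l, Flip i j] G = path_alg a b \<iota> [Flip i j, Flip k l] G"
proof
  fix mu
  show "path_alg a b \<iota> [Flip k l, Flip i j] G mu = path_alg a b \<iota> [Flip i j, Flip k l] G mu"
    using assms by (simp add: Let_def)
qed

lemma vd_facts:
  assumes "valid_dtri m T"
  shows "T (T s) = s" "s \<notin> sides m \<Longrightarrow> T s = s"
proof -
  have o: "\<forall>s. s \<notin> sides m \<longrightarrow> T s = s" and i: "\<forall>s\<in>sides m. T s \<in> sides m \<and> T s \<noteq> s \<and> T (T s) = s"
    using assms unfolding valid_dtri_def by blast+
  show "T (T s) = s"
  proof (cases "s \<in> sides m")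
    case True then show ?thesis using i by blast
  next
    case False then have "T s = s" using o by blast
    then show ?thesis by simp
  qed
  show "s \<notin> sides m \<Longrightarrow> T s = s" using o by blast
qed

lemma pe1: "path_end T [Reindex \<alpha>, Reindex \<beta>] = move_tri (Reindex \<beta>) (move_tri (Reindex \<alpha>) T)" by simp

lemma part1_tri:
  assumes "\<alpha> permutes S" "\<beta> permutes S"
  shows "move_tri (Reindex \<beta>) (move_tri (Reindex \<alpha>) T) = move_tri (Reindex (\<alpha> \<circ> \<beta>)) T"
proof -
  have bij: "bij \<alpha>" "bij \<beta>" using assms permutes_bij by auto
  have inv: "inv (\<alpha> \<circ> \<beta>) = inv \<beta> \<circ> inv \<alpha>" using bij by (simp add: o_inv_distrib)
  show ?thesis
  proof
    fix x :: "nat \<times> nat"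
    obtain k c where x: "x = (k, c)" by (cases x)
    show "move_tri (Reindex \<beta>) (move_tri (Reindex \<alpha>) T) x = move_tri (Reindex (\<alpha> \<circ> \<beta>)) T x"
      unfolding x by (simp add: inv split: prod.split)
  qed
qed

lemma rot3_tri: "rot_new_old i (rot_new_old i (rot_new_old i s)) = s" "rot_old_new i (rot_old_new i (rot_old_new i s)) = s"
proof -
  obtain k c where s: "s = (k, c)" by (cases s)
  show "rot_new_old i (rot_new_old i (rot_new_old i s)) = s" unfolding s rot_new_old_def
    by (cases "c = 0"; cases "c = 1"; cases "c = 2") auto
  show "rot_old_new i (rot_old_new i (rot_old_new i s)) = s" unfolding s rot_old_new_def
    by (cases "c = 0"; cases "c = 1"; cases "c = 2") auto
qed

lemma part6_tri: "move_tri (Rot i) (move_tri (Rot i) (move_tri (Rot i) T)) = T"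
  by (rule ext) (simp add: rot3_tri)

lemma rot_comm: "rot_new_old i (rot_new_old j s) = rot_new_old j (rot_new_old i s)"
  "rot_old_new i (rot_old_new j s) = rot_old_new j (rot_old_new i s)"
  by (cases "i = j"; auto simp: rot_new_old_def rot_old_new_def)+

lemma part7_tri: "move_tri (Rot j) (move_tri (Rot i) T) = move_tri (Rot i) (move_tri (Rot j) T)"
  by (rule ext) (simp add: rot_comm)


lemma bij_facts:
  assumes "bij \<alpha>"
  shows "\<alpha> k = i \<longleftrightarrow> k = inv \<alpha> i" "inv \<alpha> nu = inv \<alpha> i \<longleftrightarrow> nu = i" "\<alpha> (inv \<alpha> i) = i" "inv \<alpha> (\<alpha> k) = k"
proof -
  show "\<alpha> k = i \<longleftrightarrow> k = inv \<alpha> i" using bij_inv_eq_iff[OF assms] by metis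
  have "inj (inv \<alpha>)" using assms bij_imp_bij_inv bij_is_inj by blast
  then show "inv \<alpha> nu = inv \<alpha> i \<longleftrightarrow> nu = i" by (rule inj_eq)
  show "\<alpha> (inv \<alpha> i) = i" using assms bij_is_surj surj_f_inv_f by metis
  show "inv \<alpha> (\<alpha> k) = k" using assms bij_is_inj inv_f_f by metis
qed

lemma part8_tri:
  assumes "\<alpha> permutes S"
  shows "move_tri (Reindex \<alpha>) (move_tri (Rot i) T) = move_tri (Rot (inv \<alpha> i)) (move_tri (Reindex \<alpha>) T)"
proof
  have b: "bij \<alpha>" using assms permutes_bij by auto
  note bf = bij_facts[OF b]
  fix x :: "nat \<times> nat"
  obtain k c where x: "x = (k, c)" by (cases x)
  show "move_tri (Reindex \<alpha>) (move_tri (Rot i) T) x = move_tri (Rot (inv \<alpha> i)) (move_tri (Reindex \<alpha>) T) x"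
    unfolding x by (auto simp: rot_new_old_def rot_old_new_def bf split: prod.split)
qed


lemma reindex_conj: "move_tri (Reindex \<alpha>) T = (\<lambda>(nu, d). (inv \<alpha> nu, d)) \<circ> T \<circ> (\<lambda>(k, c). (\<alpha> k, c))"
  by (rule ext) (auto split: prod.split)

lemma fno_conj:
  assumes "bij \<alpha>"
  shows "(\<lambda>(k, c). (\<alpha> k, c)) (flip_new_old (inv \<alpha> i) (inv \<alpha> j) x) = flip_new_old i j ((\<lambda>(k, c). (\<alpha> k, c)) x)"
proof -
  note bf = bij_facts[OF assms]
  obtain k c where x: "x = (k, c)" by (cases x)
  show ?thesis unfolding x flip_new_old_def by (simp add: bf)
qed

lemma fon_conj:
  assumes "bij \<alpha>"
  shows "flip_old_new (inv \<alpha> i) (inv \<alpha> j) ((\<lambda>(nu, d). (inv \<alpha> nu, d)) y) = (\<lambda>(nu, d). (inv \<alpha> nu, d)) (flip_old_new i j y)"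
proof -
  note bf = bij_facts[OF assms]
  obtain k c where y: "y = (k, c)" by (cases y)
  show ?thesis unfolding y flip_old_new_def by (simp add: bf)
qed

lemma part3_tri:
  assumes "\<alpha> permutes S"
  shows "move_tri (Reindex \<alpha>) (move_tri (Flip i j) T) = move_tri (Flip (inv \<alpha> i) (inv \<alpha> j)) (move_tri (Reindex \<alpha>) T)"
proof
  have b: "bij \<alpha>" using assms permutes_bij by auto
  fix x :: "nat \<times> nat"
  show "move_tri (Reindex \<alpha>) (move_tri (Flip i j) T) x = move_tri (Flip (inv \<alpha> i) (inv \<alpha> j)) (move_tri (Reindex \<alpha>) T) x"
    unfolding reindex_conj by (simp only: move_tri.simps comp_apply fno_conj[OF b] fon_conj[OF b])
qed

lemma flip_comm:
  assumes "i \<noteq> k" "i \<noteq> l" "j \<noteq> k" "j \<noteq> l"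
  shows "flip_new_old i j (flip_new_old k l s) = flip_new_old k l (flip_new_old i j s)"
    "flip_old_new i j (flip_old_new k l s) = flip_old_new k l (flip_old_new i j s)"
  using assms by (auto simp: flip_new_old_def flip_old_new_def)

lemma part4_tri:
  assumes "i \<noteq> k" "i \<noteq> l" "j \<noteq> k" "j \<noteq> l"
  shows "move_tri (Flip i j) (move_tri (Flip k l) T) = move_tri (Flip k l) (move_tri (Flip i j) T)"
  by (rule ext) (simp add: flip_comm[OF assms])


lemma fno2: "i \<noteq> j \<Longrightarrow> flip_new_old i j (flip_new_old i j (k, c)) = (if c = 0 \<or> c = 2 then (transpose i j k, c) else (k, c))"
  by (auto simp: flip_new_old_def transpose_def)
lemma fon2: "i \<noteq> j \<Longrightarrow> flip_old_new i j (flip_old_new i j (k, c)) = (if c = 0 \<or> c = 2 then (transpose i j k, c) else (k, c))"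
  by (auto simp: flip_old_new_def transpose_def)

lemma part2_tri:
  assumes vd: "valid_dtri m T" and ij: "i < 2*m" "j < 2*m" "i \<noteq> j" and Tij: "T (i, 1) = (j, 1)"
  shows "move_tri (Flip i j) (move_tri (Flip i j) T) = move_tri (Reindex (transpose i j)) T"
proof
  fix x :: "nat \<times> nat"
  obtain k c where x: "x = (k, c)" by (cases x)
  have TT: "\<And>s. T (T s) = s" by (rule vd_facts(1)[OF vd])
  have Tout: "\<And>a d. d \<ge> 3 \<Longrightarrow> T (a, d) = (a, d)" using vd_facts(2)[OF vd] by (auto simp: sides_def)
  have Tji: "T (j, 1) = (i, 1)" using TT[of "(i,1)"] Tij by simp
  define s where "s = (\<lambda>(k::nat, c::nat). if c = 0 \<or> c = 2 then (transpose i j k, c) else (k, c))"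
  define \<sigma> where "\<sigma> = (\<lambda>(k::nat, c::nat). (transpose i j k, c))"
  have L: "move_tri (Flip i j) (move_tri (Flip i j) T) x = s (T (s x))"
    unfolding s_def by (simp add: fno2 fon2 ij split: prod.split)
  have R: "move_tri (Reindex (transpose i j)) T x = \<sigma> (T (\<sigma> x))"
    unfolding \<sigma>_def x by (simp split: prod.split)
  have key: "s z = \<sigma> z" if "snd z = 0 \<or> snd z = 2 \<or> fst z \<noteq> i \<and> fst z \<noteq> j" for z
    using that unfolding s_def \<sigma>_def by (cases z) auto
  show "move_tri (Flip i j) (move_tri (Flip i j) T) x = move_tri (Reindex (transpose i j)) T x"
    unfolding L R
  proof (cases "c = 0 \<or> c = 2")
    case True
    have sx: "s x = \<sigma> x" by (rule key) (use True x in auto)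
    obtain k' c' where z: "T (\<sigma> x) = (k', c')" by (cases "T (\<sigma> x)")
    have "c' = 0 \<or> c' = 2 \<or> k' \<noteq> i \<and> k' \<noteq> j"
    proof (rule ccontr)
      assume h: "\<not> (c' = 0 \<or> c' = 2 \<or> k' \<noteq> i \<and> k' \<noteq> j)"
      have sx2: "snd (\<sigma> x) = c" unfolding \<sigma>_def x by simp
      show False
      proof (cases "c' = 1")
        case True
        then have "\<sigma> x = T (k', c')" using TT z by metis
        then have "\<sigma> x = (j, 1) \<or> \<sigma> x = (i, 1)" using h True Tij Tji by auto
        then show False using sx2 \<open>c = 0 \<or> c = 2\<close> by auto
      next
        case False
        then have "c' \<ge> 3" using h by auto
        then have "\<sigma> x = (k', c')" using TT z Tout by metis
        then show False using sx2 \<open>c = 0 \<or> c = 2\<close> \<open>c' \<ge> 3\<close> by auto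
      qed
    qed
    then show "s (T (s x)) = \<sigma> (T (\<sigma> x))" unfolding sx z by (intro key) simp
  next
    case False
    then have sx: "s x = x" unfolding s_def x by simp
    show "s (T (s x)) = \<sigma> (T (\<sigma> x))"
    proof (cases "c = 1")
      case c1: True
      show ?thesis
      proof (cases "k = i \<or> k = j")
        case True
        then show ?thesis unfolding sx x using c1 Tij Tji ij by (auto simp: s_def \<sigma>_def)
      next
        case False
        then have sg: "\<sigma> x = x" unfolding \<sigma>_def x by simp
        obtain k' c' where z: "T x = (k', c')" by (cases "T x")
        have "c' = 0 \<or> c' = 2 \<or> k' \<noteq> i \<and> k' \<noteq> j"
        proof (rule ccontr)
          assume h: "\<not> (c' = 0 \<or> c' = 2 \<or> k' \<noteq> i \<and> k' \<noteq> j)"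
          show False
          proof (cases "c' = 1")
            case True
            then have "x = T (k', c')" using TT z by metis
            then have "x = (j, 1) \<or> x = (i, 1)" using h True Tij Tji by auto
            then show False using False x by auto
          next
            case False
            then have "c' \<ge> 3" using h by auto
            then have "x = (k', c')" using TT z Tout by metis
            then show False using c1 x \<open>c' \<ge> 3\<close> by auto
          qed
        qed
        then show ?thesis unfolding sx sg z by (intro key) simp
      qed
    next
      case False
      then have c3: "c \<ge> 3" using \<open>\<not> (c = 0 \<or> c = 2)\<close> by auto
      have "T x = x" unfolding x using Tout c3 by simp
      moreover have "T (\<sigma> x) = \<sigma> x" unfolding \<sigma>_def x using Tout c3 by simp
      ultimately show ?thesis unfolding sx \<sigma>_def x using c3 by (simp add: s_def)
    qed
  qed
qed

definition Oa :: "nat \<Rightarrow> nat \<Rightarrow> nat \<times> nat \<Rightarrow> nat \<times> nat" where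
  "Oa u v = rot_old_new u \<circ> flip_old_new u v \<circ> rot_old_new v"
definition Ob :: "nat \<Rightarrow> nat \<Rightarrow> nat \<times> nat \<Rightarrow> nat \<times> nat" where
  "Ob u v = rot_new_old v \<circ> flip_new_old u v \<circ> rot_new_old u"

lemma path_end_append: "path_end T (xs @ ys) = path_end (path_end T xs) ys"
  by (induction xs arbitrary: T) auto

lemma pe_omega: "path_end T (omega u v) = Oa u v \<circ> T \<circ> Ob u v"
  by (simp add: omega_def Oa_def Ob_def comp_assoc)

lemma part5_tri:
  assumes vd: "valid_dtri m T" and ijk: "i \<noteq> j" "i \<noteq> k" "j \<noteq> k"
    and T1: "T (i, 1) = (j, 2)" and T2: "T (j, 1) = (k, 2)"
  shows "path_end T (omega i j @ omega i k @ omega j k) = path_end T (omega j k @ omega i j)"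
proof
  fix x :: "nat \<times> nat"
  have TT: "\<And>s. T (T s) = s" by (rule vd_facts(1)[OF vd])
  have T3: "T (j, 2) = (i, 1)" "T (k, 2) = (j, 1)" using TT[of "(i,1)"] TT[of "(j,1)"] T1 T2 by simp_all
  define A1 where "A1 = Oa j k \<circ> Oa i k \<circ> Oa i j"
  define B1 where "B1 = Ob i j \<circ> Ob i k \<circ> Ob j k"
  define A2 where "A2 = Oa i j \<circ> Oa j k"
  define B2 where "B2 = Ob j k \<circ> Ob i j"
  have L: "path_end T (omega i j @ omega i k @ omega j k) x = A1 (T (B1 x))"
    by (simp add: path_end_append pe_omega A1_def B1_def)
  have R: "path_end T (omega j k @ omega i j) x = A2 (T (B2 x))"
    by (simp add: path_end_append pe_omega A2_def B2_def)
  have agree: "A1 z = A2 z" if "z \<noteq> (i, 1)" "z \<noteq> (j, 1)" "z \<noteq> (j, 2)" "z \<noteq> (k, 2)" for z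
  proof -
    obtain t d where z: "z = (t, d)" by (cases z)
    have "t = i \<or> t = j \<or> t = k \<or> (t \<noteq> i \<and> t \<noteq> j \<and> t \<noteq> k)" by blast
    moreover have "d = 0 \<or> d = 1 \<or> d = 2 \<or> d \<ge> 3" by arith
    ultimately show ?thesis using that ijk unfolding z A1_def A2_def Oa_def
      by (elim disjE conjE) (simp_all add: rot_old_new_def flip_old_new_def)
  qed
  show "path_end T (omega i j @ omega i k @ omega j k) x = path_end T (omega j k @ omega i j) x"
    unfolding L R
  proof -
    have agree2: "A1 (T y) = A2 (T y)" if "y \<noteq> (j, 2)" "y \<noteq> (i, 1)" "y \<noteq> (k, 2)" "y \<noteq> (j, 1)" for y
    proof (rule agree)
      show "T y \<noteq> (i, 1)" using that TT[of y] T1 by metis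
      show "T y \<noteq> (j, 1)" using that TT[of y] T2 by metis
      show "T y \<noteq> (j, 2)" using that TT[of y] T3 by metis
      show "T y \<noteq> (k, 2)" using that TT[of y] T3 by metis
    qed
    have b0: "B1 (i, 0) = (j, 1)" "B2 (i, 0) = (i, 1)" using ijk unfolding B1_def B2_def Ob_def by (simp_all add: rot_new_old_def flip_new_old_def)
    have b1: "B1 (i, 1) = (k, 1)" "B2 (i, 1) = (k, 1)" using ijk unfolding B1_def B2_def Ob_def by (simp_all add: rot_new_old_def flip_new_old_def)
    have b2: "B1 (i, 2) = (i, 2)" "B2 (i, 2) = (i, 2)" using ijk unfolding B1_def B2_def Ob_def by (simp_all add: rot_new_old_def flip_new_old_def)
    have b3: "B1 (j, 0) = (j, 2)" "B2 (j, 0) = (j, 1)" using ijk unfolding B1_def B2_def Ob_def by (simp_all add: rot_new_old_def flip_new_old_def)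
    have b4: "B1 (j, 1) = (k, 2)" "B2 (j, 1) = (j, 2)" using ijk unfolding B1_def B2_def Ob_def by (simp_all add: rot_new_old_def flip_new_old_def)
    have b5: "B1 (j, 2) = (i, 0)" "B2 (j, 2) = (i, 0)" using ijk unfolding B1_def B2_def Ob_def by (simp_all add: rot_new_old_def flip_new_old_def)
    have b6: "B1 (k, 0) = (k, 0)" "B2 (k, 0) = (k, 0)" using ijk unfolding B1_def B2_def Ob_def by (simp_all add: rot_new_old_def flip_new_old_def)
    have b7: "B1 (k, 1) = (i, 1)" "B2 (k, 1) = (k, 2)" using ijk unfolding B1_def B2_def Ob_def by (simp_all add: rot_new_old_def flip_new_old_def)
    have b8: "B1 (k, 2) = (j, 0)" "B2 (k, 2) = (j, 0)" using ijk unfolding B1_def B2_def Ob_def by (simp_all add: rot_new_old_def flip_new_old_def)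
    have a0: "A1 (k, 2) = (j, 1)" using ijk unfolding A1_def Oa_def by (simp add: rot_old_new_def flip_old_new_def)
    have a1: "A1 (i, 1) = (k, 1)" using ijk unfolding A1_def Oa_def by (simp add: rot_old_new_def flip_old_new_def)
    have a2: "A1 (j, 1) = (i, 0)" using ijk unfolding A1_def Oa_def by (simp add: rot_old_new_def flip_old_new_def)
    have a3: "A1 (j, 2) = (j, 0)" using ijk unfolding A1_def Oa_def by (simp add: rot_old_new_def flip_old_new_def)
    have a4: "A2 (j, 2) = (j, 1)" using ijk unfolding A2_def Oa_def by (simp add: rot_old_new_def flip_old_new_def)
    have a5: "A2 (k, 2) = (k, 1)" using ijk unfolding A2_def Oa_def by (simp add: rot_old_new_def flip_old_new_def)
    have a6: "A2 (i, 1) = (i, 0)" using ijk unfolding A2_def Oa_def by (simp add: rot_old_new_def flip_old_new_def)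
    have a7: "A2 (j, 1) = (j, 0)" using ijk unfolding A2_def Oa_def by (simp add: rot_old_new_def flip_old_new_def)
    have Bg: "B1 (t, d) = (t, d) \<and> B2 (t, d) = (t, d)" if h: "(t \<noteq> i \<and> t \<noteq> j \<and> t \<noteq> k) \<or> d \<ge> 3" for t d
    proof -
      have "(t \<noteq> i \<and> t \<noteq> j \<and> t \<noteq> k) \<or> d \<ge> 3" by (rule h)
      then show ?thesis
      proof
        assume "t \<noteq> i \<and> t \<noteq> j \<and> t \<noteq> k"
        then show ?thesis unfolding B1_def B2_def Ob_def by (simp add: rot_new_old_def flip_new_old_def)
      next
        assume "d \<ge> 3"
        then show ?thesis unfolding B1_def B2_def Ob_def by (simp add: rot_new_old_def flip_new_old_def)
      qed
    qed
    obtain t d where x: "x = (t, d)" by (cases x)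
    have "A1 (T (B1 (t, d))) = A2 (T (B2 (t, d)))"
    proof (cases "(t \<noteq> i \<and> t \<noteq> j \<and> t \<noteq> k) \<or> d \<ge> 3")
      case True
      then have e: "B1 (t, d) = (t, d)" "B2 (t, d) = (t, d)" using Bg by blast+
      show ?thesis unfolding e by (rule agree2) (use True in auto)
    next
      case False
      then have "t = i \<or> t = j \<or> t = k" "d = 0 \<or> d = 1 \<or> d = 2" by auto
      then show ?thesis
        by (elim disjE) (simp_all only: b0 b1 b2 b3 b4 b5 b6 b7 b8 a0 a1 a2 a3 a4 a5 a6 a7 T1 T2 T3 agree2 prod.inject ijk ijk[symmetric] simp_thms)
    qed
    then show "A1 (T (B1 x)) = A2 (T (B2 x))" using x by simp
  qed
qed

lemma is_path_append: "is_path m T (xs @ ys) \<longleftrightarrow> is_path m T xs \<and> is_path m (path_end T xs) ys"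
  by (induction xs arbitrary: T) auto

lemma is_path_omega: "is_path m T (omega u v) \<longleftrightarrow> u < 2*m \<and> v < 2*m \<and> u \<noteq> v \<and> rot_old_new v (T (rot_new_old v (u, 1))) = (v, 1)"
  by (auto simp: omega_def)

lemma rf_eval:
  "i \<noteq> j \<Longrightarrow> rot_new_old j (i, c) = (i, c)" "i \<noteq> j \<Longrightarrow> rot_old_new j (i, c) = (i, c)"
  "rot_new_old i (i, 0) = (i, 1)" "rot_new_old i (i, 1) = (i, 2)" "rot_new_old i (i, 2) = (i, 0)"
  "rot_old_new i (i, 0) = (i, 2)" "rot_old_new i (i, 1) = (i, 0)" "rot_old_new i (i, 2) = (i, 1)"
  "flip_new_old i j (i, 0) = (i, 2)" "flip_new_old i j (i, 2) = (j, 0)"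
  "i \<noteq> j \<Longrightarrow> flip_new_old i j (j, 0) = (j, 2)" "i \<noteq> j \<Longrightarrow> flip_new_old i j (j, 2) = (i, 0)"
  "i \<noteq> j \<Longrightarrow> flip_new_old i j (i, 1) = (i, 1)" "i \<noteq> j \<Longrightarrow> flip_new_old i j (j, 1) = (j, 1)"
  "t \<noteq> i \<Longrightarrow> t \<noteq> j \<Longrightarrow> flip_new_old i j (t, c) = (t, c)"
  "flip_old_new i j (i, 2) = (i, 0)" "i \<noteq> j \<Longrightarrow> flip_old_new i j (j, 0) = (i, 2)"
  "i \<noteq> j \<Longrightarrow> flip_old_new i j (j, 2) = (j, 0)" "i \<noteq> j \<Longrightarrow> flip_old_new i j (i, 0) = (j, 2)"
  "i \<noteq> j \<Longrightarrow> flip_old_new i j (i, 1) = (i, 1)" "i \<noteq> j \<Longrightarrow> flip_old_new i j (j, 1) = (j, 1)"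
  "t \<noteq> i \<Longrightarrow> t \<noteq> j \<Longrightarrow> flip_old_new i j (t, c) = (t, c)"
  by (simp_all add: rot_new_old_def rot_old_new_def flip_new_old_def flip_old_new_def)

lemma part5_path:
  assumes vd: "valid_dtri m T" and ijk: "i < 2*m" "j < 2*m" "k < 2*m" "i \<noteq> j" "i \<noteq> k" "j \<noteq> k"
    and T1: "T (i, 1) = (j, 2)" and T2: "T (j, 1) = (k, 2)"
  shows "is_path m T (omega i j @ omega i k @ omega j k)" "is_path m T (omega j k @ omega i j)"
proof -
  have TT: "\<And>s. T (T s) = s" by (rule vd_facts(1)[OF vd])
  have T3: "T (j, 2) = (i, 1)" "T (k, 2) = (j, 1)" using TT[of "(i,1)"] TT[of "(j,1)"] T1 T2 by simp_all
  have ijk': "j \<noteq> i" "k \<noteq> i" "k \<noteq> j" using ijk by auto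
  note ev = rf_eval rf_eval[unfolded One_nat_def] T1[unfolded One_nat_def] T2[unfolded One_nat_def] T3[unfolded One_nat_def]
  show "is_path m T (omega j k @ omega i j)"
    unfolding is_path_append is_path_omega path_end_append pe_omega
    using ijk ijk' by (simp add: Oa_def Ob_def ev T1 T2 T3)
  show "is_path m T (omega i j @ omega i k @ omega j k)"
    unfolding is_path_append is_path_omega path_end_append pe_omega
    using ijk ijk' by (simp add: Oa_def Ob_def ev T1 T2 T3)
qed

theorem proposition3p3:
  fixes q a b :: complex and \<iota> :: "complex \<Rightarrow> 'a::division_ring"
    and m :: nat and g :: "'a gens"
  assumes "q \<noteq> 0" and "a \<noteq> 0" and "b \<noteq> 0"
    and "central_C_algebra \<iota>"
    and "m > 0"
    and "kashaev_generic m q \<iota> g"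
  shows
    "(\<forall>T \<alpha> \<beta>. valid_dtri m T \<longrightarrow> \<alpha> permutes {..<2*m} \<longrightarrow> \<beta> permutes {..<2*m} \<longrightarrow>
        paths_agree m a b \<iota> g T [Reindex \<alpha>, Reindex \<beta>] [Reindex (\<alpha> \<circ> \<beta>)])
   \<and> (\<forall>T i j. valid_dtri m T \<longrightarrow> applicable m (Flip i j) T \<longrightarrow>
        paths_agree m a b \<iota> g T [Flip i j, Flip i j] [Reindex (transpose i j)])
   \<and> (\<forall>T i j \<alpha>. valid_dtri m T \<longrightarrow> applicable m (Flip i j) T \<longrightarrow> \<alpha> permutes {..<2*m} \<longrightarrow>
        paths_agree m a b \<iota> g T [Flip i j, Reindex \<alpha>]
          [Reindex \<alpha>, Flip (inv \<alpha> i) (inv \<alpha> j)])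
   \<and> (\<forall>T i j k l. valid_dtri m T \<longrightarrow> {i, j} \<noteq> {k, l} \<longrightarrow>
        applicable m (Flip i j) T \<longrightarrow> applicable m (Flip k l) T \<longrightarrow>
        paths_agree m a b \<iota> g T [Flip k l, Flip i j] [Flip i j, Flip k l])
   \<and> (\<forall>T i j k. valid_dtri m T \<longrightarrow> i < 2*m \<longrightarrow> j < 2*m \<longrightarrow> k < 2*m \<longrightarrow>
        i \<noteq> j \<longrightarrow> i \<noteq> k \<longrightarrow> j \<noteq> k \<longrightarrow> T (i, 1) = (j, 2) \<longrightarrow> T (j, 1) = (k, 2) \<longrightarrow>
        paths_agree m a b \<iota> g T (omega i j @ omega i k @ omega j k) (omega j k @ omega i j))
   \<and> (\<forall>T i. valid_dtri m T \<longrightarrow> i < 2*m \<longrightarrow>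
        paths_agree m a b \<iota> g T [Rot i, Rot i, Rot i] [])
   \<and> (\<forall>T i j. valid_dtri m T \<longrightarrow> i < 2*m \<longrightarrow> j < 2*m \<longrightarrow>
        paths_agree m a b \<iota> g T [Rot i, Rot j] [Rot j, Rot i])
   \<and> (\<forall>T i \<alpha>. valid_dtri m T \<longrightarrow> i < 2*m \<longrightarrow> \<alpha> permutes {..<2*m} \<longrightarrow>
        paths_agree m a b \<iota> g T [Rot i, Reindex \<alpha>] [Reindex \<alpha>, Rot (inv \<alpha> i)])"
proof -
  note cen = assms(4) and kg = assms(6) and q0 = assms(1) and a0 = assms(2) and b0 = assms(3)
  note R = kg_rels[OF kg]
  have p1: "\<forall>T \<alpha> \<beta>. valid_dtri m T \<longrightarrow> \<alpha> permutes {..<2*m} \<longrightarrow> \<beta> permutes {..<2*m} \<longrightarrow>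
        paths_agree m a b \<iota> g T [Reindex \<alpha>, Reindex \<beta>] [Reindex (\<alpha> \<circ> \<beta>)]"
  proof (intro allI impI)
    fix T \<alpha> \<beta> assume vd: "valid_dtri m T" and pa: "\<alpha> permutes {..<2*m}" and pb: "\<beta> permutes {..<2*m}"
    show "paths_agree m a b \<iota> g T [Reindex \<alpha>, Reindex \<beta>] [Reindex (\<alpha> \<circ> \<beta>)]"
      unfolding paths_agree_def
    proof (intro conjI)
      show "is_path m T [Reindex \<alpha>, Reindex \<beta>]" using pa pb by simp
      show "is_path m T [Reindex (\<alpha> \<circ> \<beta>)]" using permutes_compose[OF pb pa] by simp
      show "path_end T [Reindex \<alpha>, Reindex \<beta>] = path_end T [Reindex (\<alpha> \<circ> \<beta>)]"
        by (simp only: path_end.simps part1_tri[OF pa pb])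
      show "\<forall>mu<2 * m. path_alg a b \<iota> [Reindex \<alpha>, Reindex \<beta>] g mu = path_alg a b \<iota> [Reindex (\<alpha> \<circ> \<beta>)] g mu"
        by simp
    qed
  qed
  have p2: "\<forall>T i j. valid_dtri m T \<longrightarrow> applicable m (Flip i j) T \<longrightarrow>
        paths_agree m a b \<iota> g T [Flip i j, Flip i j] [Reindex (transpose i j)]"
  proof (intro allI impI)
    fix T i j assume vd: "valid_dtri m T" and ap: "applicable m (Flip i j) T"
    then have ij: "i < 2*m" "j < 2*m" "i \<noteq> j" and Tij: "T (i, 1) = (j, 1)" by auto
    show "paths_agree m a b \<iota> g T [Flip i j, Flip i j] [Reindex (transpose i j)]"
      unfolding paths_agree_def
    proof (intro conjI)
      have "move_tri (Flip i j) T (i, 1) = (j, 1)" using ij Tij by (simp add: rf_eval rf_eval[unfolded One_nat_def])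
      then show "is_path m T [Flip i j, Flip i j]" using ij Tij by simp
      show "is_path m T [Reindex (transpose i j)]" using ij by (simp add: permutes_swap_id)
      show "path_end T [Flip i j, Flip i j] = path_end T [Reindex (transpose i j)]"
        by (simp only: path_end.simps part2_tri[OF vd ij Tij])
      show "\<forall>mu<2 * m. path_alg a b \<iota> [Flip i j, Flip i j] g mu = path_alg a b \<iota> [Reindex (transpose i j)] g mu"
        unfolding flip2_alg[OF cen kg q0 b0 ij] by simp
    qed
  qed
  have p3: "\<forall>T i j \<alpha>. valid_dtri m T \<longrightarrow> applicable m (Flip i j) T \<longrightarrow> \<alpha> permutes {..<2*m} \<longrightarrow>
        paths_agree m a b \<iota> g T [Flip i j, Reindex \<alpha>] [Reindex \<alpha>, Flip (inv \<alpha> i) (inv \<alpha> j)]"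
  proof (intro allI impI)
    fix T i j \<alpha> assume vd: "valid_dtri m T" and ap: "applicable m (Flip i j) T" and pa: "\<alpha> permutes {..<2*m}"
    then have ij: "i < 2*m" "j < 2*m" "i \<noteq> j" and Tij: "T (i, 1) = (j, 1)" by auto
    have b: "bij \<alpha>" using pa permutes_bij by auto
    note bf = bij_facts[OF b]
    have pi: "inv \<alpha> permutes {..<2*m}" by (rule permutes_inv[OF pa])
    have ii: "inv \<alpha> i < 2*m" "inv \<alpha> j < 2*m" using permutes_in_image[OF pi] ij by auto
    have ne: "inv \<alpha> i \<noteq> inv \<alpha> j" using bf(2) ij by auto
    show "paths_agree m a b \<iota> g T [Flip i j, Reindex \<alpha>] [Reindex \<alpha>, Flip (inv \<alpha> i) (inv \<alpha> j)]"
      unfolding paths_agree_def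
    proof (intro conjI)
      show "is_path m T [Flip i j, Reindex \<alpha>]" using ij Tij pa by simp
      have "move_tri (Reindex \<alpha>) T (inv \<alpha> i, 1) = (inv \<alpha> j, 1)" using Tij by (simp add: bf)
      then show "is_path m T [Reindex \<alpha>, Flip (inv \<alpha> i) (inv \<alpha> j)]" using pa ii ne by simp
      show "path_end T [Flip i j, Reindex \<alpha>] = path_end T [Reindex \<alpha>, Flip (inv \<alpha> i) (inv \<alpha> j)]"
        by (simp only: path_end.simps part3_tri[OF pa])
      show "\<forall>mu<2 * m. path_alg a b \<iota> [Flip i j, Reindex \<alpha>] g mu = path_alg a b \<iota> [Reindex \<alpha>, Flip (inv \<alpha> i) (inv \<alpha> j)] g mu"
        unfolding flip_reindex_alg[OF b ij(3)] by simp
    qed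
  qed
  have p4: "\<forall>T i j k l. valid_dtri m T \<longrightarrow> {i, j} \<noteq> {k, l} \<longrightarrow>
        applicable m (Flip i j) T \<longrightarrow> applicable m (Flip k l) T \<longrightarrow>
        paths_agree m a b \<iota> g T [Flip k l, Flip i j] [Flip i j, Flip k l]"
  proof (intro allI impI)
    fix T i j k l assume vd: "valid_dtri m T" and ne: "{i, j} \<noteq> {k, l}"
      and ap1: "applicable m (Flip i j) T" and ap2: "applicable m (Flip k l) T"
    then have ij: "i < 2*m" "j < 2*m" "i \<noteq> j" and Tij: "T (i, 1) = (j, 1)"
      and kl: "k < 2*m" "l < 2*m" "k \<noteq> l" and Tkl: "T (k, 1) = (l, 1)" by auto
    have TT: "\<And>s. T (T s) = s" by (rule vd_facts(1)[OF vd])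
    have Tji: "T (j, 1) = (i, 1)" using TT[of "(i,1)"] Tij by simp
    have Tlk: "T (l, 1) = (k, 1)" using TT[of "(k,1)"] Tkl by simp
    have d: "i \<noteq> k" "i \<noteq> l" "j \<noteq> k" "j \<noteq> l"
    proof -
      show "i \<noteq> k" proof assume "i = k" then have "j = l" using Tij Tkl by simp
        then show False using ne \<open>i = k\<close> by simp qed
      show "i \<noteq> l" proof assume "i = l" then have "k = j" using Tji Tlk Tij by simp
        then show False using ne \<open>i = l\<close> by auto qed
      show "j \<noteq> k" proof assume "j = k" then have "l = i" using Tji Tkl by simp
        then show False using ne \<open>j = k\<close> by auto qed
      show "j \<noteq> l" proof assume "j = l" then have "k = i" using Tji Tlk by simp
        then show False using ne \<open>j = l\<close> by auto qed
    qed
    show "paths_agree m a b \<iota> g T [Flip k l, Flip i j] [Flip i j, Flip k l]"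
      unfolding paths_agree_def
    proof (intro conjI)
      have "move_tri (Flip k l) T (i, 1) = (j, 1)" using d Tij by (simp add: rf_eval rf_eval[unfolded One_nat_def])
      then show "is_path m T [Flip k l, Flip i j]" using ij kl Tkl by simp
      have "move_tri (Flip i j) T (k, 1) = (l, 1)" using d Tkl by (simp add: rf_eval rf_eval[unfolded One_nat_def])
      then show "is_path m T [Flip i j, Flip k l]" using ij kl Tij by simp
      show "path_end T [Flip k l, Flip i j] = path_end T [Flip i j, Flip k l]"
        by (simp only: path_end.simps part4_tri[OF d])
      show "\<forall>mu<2 * m. path_alg a b \<iota> [Flip k l, Flip i j] g mu = path_alg a b \<iota> [Flip i j, Flip k l] g mu"
        unfolding flip_flip_alg[OF d] by simp
    qed
  qed
  have p5: "\<forall>T i j k. valid_dtri m T \<longrightarrow> i < 2*m \<longrightarrow> j < 2*m \<longrightarrow> k < 2*m \<longrightarrow>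
        i \<noteq> j \<longrightarrow> i \<noteq> k \<longrightarrow> j \<noteq> k \<longrightarrow> T (i, 1) = (j, 2) \<longrightarrow> T (j, 1) = (k, 2) \<longrightarrow>
        paths_agree m a b \<iota> g T (omega i j @ omega i k @ omega j k) (omega j k @ omega i j)"
  proof (intro allI impI)
    fix T i j k assume vd: "valid_dtri m T" and ijk: "i < 2*m" "j < 2*m" "k < 2*m" "i \<noteq> j" "i \<noteq> k" "j \<noteq> k"
      and T1: "T (i, 1) = (j, 2)" and T2: "T (j, 1) = (k, 2)"
    show "paths_agree m a b \<iota> g T (omega i j @ omega i k @ omega j k) (omega j k @ omega i j)"
      unfolding paths_agree_def
      using part5_path[OF vd ijk T1 T2] part5_tri[OF vd ijk(4-6) T1 T2]
      unfolding pent_alg[OF cen kg q0 a0 b0 ijk] by simp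
  qed
  have p6: "\<forall>T i. valid_dtri m T \<longrightarrow> i < 2*m \<longrightarrow> paths_agree m a b \<iota> g T [Rot i, Rot i, Rot i] []"
  proof (intro allI impI)
    fix T i assume vd: "valid_dtri m T" and i: "i < 2*m"
    show "paths_agree m a b \<iota> g T [Rot i, Rot i, Rot i] []"
      unfolding paths_agree_def
    proof (intro conjI)
      show "is_path m T [Rot i, Rot i, Rot i]" "is_path m T []" using i by simp_all
      show "path_end T [Rot i, Rot i, Rot i] = path_end T []" by (simp only: path_end.simps part6_tri)
      show "\<forall>mu<2 * m. path_alg a b \<iota> [Rot i, Rot i, Rot i] g mu = path_alg a b \<iota> [] g mu"
        unfolding rot3_alg[of \<iota> a g i b, OF cen a0 R(1)[OF i] R(2)[OF i]] by simp
    qed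
  qed
  have p7: "\<forall>T i j. valid_dtri m T \<longrightarrow> i < 2*m \<longrightarrow> j < 2*m \<longrightarrow>
        paths_agree m a b \<iota> g T [Rot i, Rot j] [Rot j, Rot i]"
  proof (intro allI impI)
    fix T i j assume vd: "valid_dtri m T" and i: "i < 2*m" and j: "j < 2*m"
    show "paths_agree m a b \<iota> g T [Rot i, Rot j] [Rot j, Rot i]"
      unfolding paths_agree_def
    proof (intro conjI)
      show "is_path m T [Rot i, Rot j]" "is_path m T [Rot j, Rot i]" using i j by simp_all
      show "path_end T [Rot i, Rot j] = path_end T [Rot j, Rot i]" by (simp only: path_end.simps part7_tri)
      show "\<forall>mu<2 * m. path_alg a b \<iota> [Rot i, Rot j] g mu = path_alg a b \<iota> [Rot j, Rot i] g mu"
        unfolding rot_comm_alg[of a b \<iota> i j g] by simp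
    qed
  qed
  have p8: "\<forall>T i \<alpha>. valid_dtri m T \<longrightarrow> i < 2*m \<longrightarrow> \<alpha> permutes {..<2*m} \<longrightarrow>
        paths_agree m a b \<iota> g T [Rot i, Reindex \<alpha>] [Reindex \<alpha>, Rot (inv \<alpha> i)]"
  proof (intro allI impI)
    fix T i \<alpha> assume vd: "valid_dtri m T" and i: "i < 2*m" and pa: "\<alpha> permutes {..<2*m}"
    have b: "bij \<alpha>" using pa permutes_bij by auto
    have pi: "inv \<alpha> permutes {..<2*m}" by (rule permutes_inv[OF pa])
    have ii: "inv \<alpha> i < 2*m" using permutes_in_image[OF pi] i by auto
    show "paths_agree m a b \<iota> g T [Rot i, Reindex \<alpha>] [Reindex \<alpha>, Rot (inv \<alpha> i)]"
      unfolding paths_agree_def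
    proof (intro conjI)
      show "is_path m T [Rot i, Reindex \<alpha>]" "is_path m T [Reindex \<alpha>, Rot (inv \<alpha> i)]" using i ii pa by simp_all
      show "path_end T [Rot i, Reindex \<alpha>] = path_end T [Reindex \<alpha>, Rot (inv \<alpha> i)]"
        by (simp only: path_end.simps part8_tri[OF pa])
      show "\<forall>mu<2 * m. path_alg a b \<iota> [Rot i, Reindex \<alpha>] g mu = path_alg a b \<iota> [Reindex \<alpha>, Rot (inv \<alpha> i)] g mu"
        unfolding rot_reindex_alg[OF b] by simp
    qed
  qed
  show ?thesis using p1 p2 p3 p4 p5 p6 p7 p8 by (intro conjI)
qed

end
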